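(* Let $\nu_0=0$, $s>0$, $\gamma\ge0$, $u>0$. Then for every $r\ge0$ and $y_0\in[0,1]$, $$g_r(y_0)=y_0\exp\Big(-\int_0^r\big(1-y(\xi;y_0)\big)\big(s+\gamma(1-y(\xi;y_0))\big)\,d\xi\Big),$$ where $y(\cdot;y_0)$ solves $\dot y=-y(1-y)[s+\gamma(1-y)]+u(1-y)$, $y(0)=y_0$.
   Context: Embedded ASG: let $\Xi^\star$ be the set of finite rooted trees in which every vertex has outdegree at most 3, the children of an outdegree-2 vertex are labelled left and right, the children of an outdegree-3 vertex are labelled left, middle and right, and every outdegree-1 vertex carries a mark $\times$ or $\circ$. The embedded ASG process $(a_r)_{r\ge0}$ starts from a single unmarked root. Independently at each leaf $\ell$: at rate $s$ two children (left, right) are attached; at rate $\gamma$ three children (left, middle, right) are attached; at rate $u\nu_1$ one child is attached and $\ell$ is marked $\times$; at rate $u\nu_0$ one child is attached and $\ell$ is marked $\circ$. Typing: given a leaf-type configuration $c\in\{0,1\}^{\text{leaves}}$, vertex types $\bar c$ are propagated towards the root as follows. A $\times$-marked vertex has type 1 and a $\circ$-marked vertex has type 0. An outdegree-2 vertex has type 1 iff both children have type 1. An outdegree-3 vertex has type 0 iff its left child has type 0 or both its middle and right children have type 0. Ancestral leaf $\lambda_v$ of a vertex $v$: - a leaf is its own ancestral leaf; - for outdegree 2, $\lambda_v$ is $\lambda$ of the right child if the right child has type 0, and $\lambda$ of the left child otherwise; - for outdegree 3, $\lambda_v$ is $\lambda$ of the right child if the middle and right children both have type 0, and $\lambda$ of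 the left child otherwise; - for outdegree 1, $\lambda_v$ is $\lambda$ of the child. $g_r(y_0)$ is the probability that $c_{\lambda_{\rm root}(a_r)}=1$, where the leaves of $a_r$ are typed independently, each with type 1 with probability $y_0$, independently of $a_r$. *)

theory Defs
  imports "HOL-Analysis.Analysis"
begin

text \<open>Trees of the embedded ASG (the set Xi-star). Children are ordered
(left, middle, right). MutX / MutO are outdegree-1 vertices marked
cross / circle.\<close>
datatype asg = Leaf | Bin asg asg | Ter asg asg asg | MutX asg | MutO asg

primrec nleaves :: "asg \<Rightarrow> nat" where
  "nleaves Leaf = 1"
| "nleaves (Bin a b) = nleaves a + nleaves b"
| "nleaves (Ter a b c) = nleaves a + nleaves b + nleaves c"
| "nleaves (MutX a) = nleaves a"
| "nleaves (MutO a) = nleaves a"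

text \<open>A leaf-type configuration is a bool list listing the types of the
leaves in left-to-right order (True = type 1, False = type 0).
vtype t cs is the type of the root of t.\<close>
primrec vtype :: "asg \<Rightarrow> bool list \<Rightarrow> bool" where
  "vtype Leaf cs = hd cs"
| "vtype (Bin a b) cs =
     (vtype a (take (nleaves a) cs) \<and> vtype b (drop (nleaves a) cs))"
| "vtype (Ter a b c) cs =
     (let ca = take (nleaves a) cs; rest = drop (nleaves a) cs;
          cb = take (nleaves b) rest; cc = drop (nleaves b) rest
      in \<not> (\<not> vtype a ca \<or> (\<not> vtype b cb \<and> \<not> vtype c cc)))"
| "vtype (MutX a) cs = True"
| "vtype (MutO a) cs = False"

text \<open>Index (in left-to-right leaf order) of the ancestral leaf of the root.\<close>
primrec anc :: "asg \<Rightarrow> bool list \<Rightarrow> nat" where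
  "anc Leaf cs = 0"
| "anc (Bin a b) cs =
     (let ca = take (nleaves a) cs; cb = drop (nleaves a) cs
      in if \<not> vtype b cb then nleaves a + anc b cb else anc a ca)"
| "anc (Ter a b c) cs =
     (let ca = take (nleaves a) cs; rest = drop (nleaves a) cs;
          cb = take (nleaves b) rest; cc = drop (nleaves b) rest
      in if \<not> vtype b cb \<and> \<not> vtype c cc
         then nleaves a + nleaves b + anc c cc else anc a ca)"
| "anc (MutX a) cs = anc a cs"
| "anc (MutO a) cs = anc a cs"

definition totrate :: "real \<Rightarrow> real \<Rightarrow> real \<Rightarrow> real \<Rightarrow> real \<Rightarrow> real" where
  "totrate s g u nu0 nu1 = s + g + u * nu1 + u * nu0"

text \<open>asg_prob s g u nu0 nu1 t r = P(a_r = t) for the embedded ASG started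
from a single root: the root leaf waits an exponential time with the total
rate, then performs the event creating the root's children, which evolve
independently for the remaining time.\<close>
primrec asg_prob :: "real \<Rightarrow> real \<Rightarrow> real \<Rightarrow> real \<Rightarrow> real \<Rightarrow> asg \<Rightarrow> real \<Rightarrow> real" where
  "asg_prob s g u nu0 nu1 Leaf r = exp (- totrate s g u nu0 nu1 * r)"
| "asg_prob s g u nu0 nu1 (Bin a b) r =
     integral {0..r} (\<lambda>\<tau>. s * exp (- totrate s g u nu0 nu1 * \<tau>)
        * asg_prob s g u nu0 nu1 a (r - \<tau>) * asg_prob s g u nu0 nu1 b (r - \<tau>))"
| "asg_prob s g u nu0 nu1 (Ter a b c) r =
     integral {0..r} (\<lambda>\<tau>. g * exp (- totrate s g u nu0 nu1 * \<tau>)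
        * asg_prob s g u nu0 nu1 a (r - \<tau>) * asg_prob s g u nu0 nu1 b (r - \<tau>)
        * asg_prob s g u nu0 nu1 c (r - \<tau>))"
| "asg_prob s g u nu0 nu1 (MutX a) r =
     integral {0..r} (\<lambda>\<tau>. u * nu1 * exp (- totrate s g u nu0 nu1 * \<tau>)
        * asg_prob s g u nu0 nu1 a (r - \<tau>))"
| "asg_prob s g u nu0 nu1 (MutO a) r =
     integral {0..r} (\<lambda>\<tau>. u * nu0 * exp (- totrate s g u nu0 nu1 * \<tau>)
        * asg_prob s g u nu0 nu1 a (r - \<tau>))"

definition anc_type1_prob :: "asg \<Rightarrow> real \<Rightarrow> real" where
  "anc_type1_prob t y0 =
     (\<Sum>cs\<in>{cs. length cs = nleaves t}.
        (\<Prod>i<nleaves t. if cs ! i then y0 else 1 - y0)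
        * (if cs ! anc t cs then 1 else 0))"

definition g_asg :: "real \<Rightarrow> real \<Rightarrow> real \<Rightarrow> real \<Rightarrow> real \<Rightarrow> real \<Rightarrow> real \<Rightarrow> real" where
  "g_asg s g u nu0 nu1 r y0 =
     infsum (\<lambda>t. asg_prob s g u nu0 nu1 t r * anc_type1_prob t y0) UNIV"

end

theory Submission
  imports Defs
begin

definition L :: "nat \<Rightarrow> bool list set" where "L n = {cs. length cs = n}"
definition wt :: "real \<Rightarrow> bool list \<Rightarrow> real" where
  "wt p cs = prod_list (map (\<lambda>b. if b then p else 1 - p) cs)"
definition EE :: "real \<Rightarrow> nat \<Rightarrow> (bool list \<Rightarrow> real) \<Rightarrow> real" where
  "EE p n h = (\<Sum>cs\<in>L n. wt p cs * h cs)"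

lemma prod_nth_eq: "(\<Prod>i<length cs. f (cs ! i)) = prod_list (map f cs)"
proof (induction cs)
  case Nil then show ?case by simp
next
  case (Cons x xs)
  then show ?case by (simp add: prod.lessThan_Suc_shift del: prod.lessThan_Suc)
qed

lemma finite_L: "finite (L n)"
proof -
  have "L n = {xs. set xs \<subseteq> UNIV \<and> length xs = n}" by (auto simp: L_def)
  then show ?thesis using finite_lists_length_eq[of "UNIV::bool set" n] by simp
qed

lemma wt_append: "wt p (xs @ ys) = wt p xs * wt p ys"
  by (simp add: wt_def)

lemma L_split: "L (m + n) = (\<lambda>(x, y). x @ y) ` (L m \<times> L n)"
proof
  show "L (m + n) \<subseteq> (\<lambda>(x, y). x @ y) ` (L m \<times> L n)"
  proof
    fix cs assume "cs \<in> L (m + n)"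
    then have "cs = take m cs @ drop m cs" "take m cs \<in> L m" "drop m cs \<in> L n"
      by (auto simp: L_def)
    then show "cs \<in> (\<lambda>(x, y). x @ y) ` (L m \<times> L n)"
      by (intro image_eqI[of _ _ "(take m cs, drop m cs)"]) simp_all
  qed
qed (auto simp: L_def)

lemma L_inj: "inj_on (\<lambda>(x, y). x @ y) (L m \<times> L n)"
  by (auto simp: inj_on_def L_def)

lemma EE_add: "EE p (m + n) h = EE p m (\<lambda>xs. EE p n (\<lambda>ys. h (xs @ ys)))"
proof -
  have "EE p (m + n) h = (\<Sum>z\<in>L m \<times> L n. wt p (fst z @ snd z) * h (fst z @ snd z))"
    unfolding EE_def L_split by (subst sum.reindex[OF L_inj]) (simp add: case_prod_beta)
  also have "\<dots> = (\<Sum>xs\<in>L m. \<Sum>ys\<in>L n. wt p (xs @ ys) * h (xs @ ys))"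
    by (simp add: sum.cartesian_product case_prod_beta)
  also have "\<dots> = EE p m (\<lambda>xs. EE p n (\<lambda>ys. h (xs @ ys)))"
    by (simp add: EE_def wt_append sum_distrib_left mult.assoc)
  finally show ?thesis .
qed

lemma L_one: "L (Suc 0) = {[True], [False]}"
  by (auto simp: L_def length_Suc_conv)

lemma sum_wt: "(\<Sum>cs\<in>L n. wt p cs) = 1"
proof (induction n)
  case 0
  have "L 0 = {[]}" by (auto simp: L_def)
  then show ?case by (simp add: wt_def)
next
  case (Suc n)
  have "(\<Sum>cs\<in>L (Suc n). wt p cs) = EE p (Suc 0 + n) (\<lambda>_. 1)" by (simp add: EE_def)
  also have "\<dots> = EE p (Suc 0) (\<lambda>xs. EE p n (\<lambda>ys. 1))" by (rule EE_add)
  also have "EE p n (\<lambda>ys. 1) = 1" using Suc by (simp add: EE_def)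
  also have "EE p (Suc 0) (\<lambda>xs. 1) = 1" by (simp add: EE_def L_one wt_def)
  finally show ?case .
qed

lemma EE_const: "EE p n (\<lambda>_. c) = c"
  by (simp add: EE_def sum_distrib_right[symmetric] sum_wt)

lemma EE_cmult: "EE p n (\<lambda>x. c * h x) = c * EE p n h"
  unfolding EE_def sum_distrib_left by (rule sum.cong) auto
lemma EE_multc: "EE p n (\<lambda>x. h x * c) = EE p n h * c"
  unfolding EE_def sum_distrib_right by (rule sum.cong) (simp_all add: mult.assoc)
lemma EE_plus: "EE p n (\<lambda>x. f x + g x) = EE p n f + EE p n g"
  by (simp add: EE_def sum.distrib algebra_simps)
lemma EE_minus: "EE p n (\<lambda>x. f x - g x) = EE p n f - EE p n g"
  by (simp add: EE_def sum_subtractf algebra_simps)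

lemma wt_nonneg: "p \<in> {0..1} \<Longrightarrow> 0 \<le> wt p cs"
  by (induction cs) (auto simp: wt_def)

lemma EE_mono: "p \<in> {0..1} \<Longrightarrow> (\<And>x. f x \<le> g x) \<Longrightarrow> EE p n f \<le> EE p n g"
  unfolding EE_def by (intro sum_mono mult_left_mono) (auto simp: wt_nonneg)

definition ind :: "bool \<Rightarrow> real" where "ind b = (if b then 1 else 0)"

primrec noO :: "asg \<Rightarrow> bool" where
  "noO Leaf = True"
| "noO (Bin a b) = (noO a \<and> noO b)"
| "noO (Ter a b c) = (noO a \<and> noO b \<and> noO c)"
| "noO (MutX a) = noO a"
| "noO (MutO a) = False"

definition vp :: "real \<Rightarrow> asg \<Rightarrow> real" where
  "vp p t = EE p (nleaves t) (\<lambda>cs. ind (vtype t cs))"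
definition ap :: "real \<Rightarrow> asg \<Rightarrow> real" where
  "ap p t = EE p (nleaves t) (\<lambda>cs. ind (cs ! anc t cs))"

lemma EE_cong: "(\<And>cs. cs \<in> L n \<Longrightarrow> f cs = g cs) \<Longrightarrow> EE p n f = EE p n g"
  unfolding EE_def by (rule sum.cong) auto

lemma anc_type1_prob_eq: "anc_type1_prob t p = ap p t"
  unfolding anc_type1_prob_def ap_def EE_def ind_def
  by (rule sum.cong) (auto simp: L_def wt_def prod_nth_eq[of "\<lambda>b. if b then p else 1 - p", symmetric])

lemma nleaves_pos: "0 < nleaves t"
  by (induction t) auto

lemma anc_lt: "length cs = nleaves t \<Longrightarrow> anc t cs < nleaves t"
proof (induction t arbitrary: cs)
  case (Bin a b)
  have "anc a (take (nleaves a) cs) < nleaves a" using Bin by simp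
  moreover have "anc b (drop (nleaves a) cs) < nleaves b" using Bin by simp
  ultimately show ?case by (auto simp: Let_def)
next
  case (Ter a b c)
  have "anc a (take (nleaves a) cs) < nleaves a" using Ter by simp
  moreover have "anc c (drop (nleaves b) (drop (nleaves a) cs)) < nleaves c" using Ter by simp
  ultimately show ?case by (auto simp: Let_def)
qed auto

lemma vtype_Bin_app: "nleaves a = length xs \<Longrightarrow> vtype (Bin a b) (xs @ ys) = (vtype a xs \<and> vtype b ys)"
  by simp
lemma anc_Bin_app: "nleaves a = length xs \<Longrightarrow>
   anc (Bin a b) (xs @ ys) = (if \<not> vtype b ys then nleaves a + anc b ys else anc a xs)"
  by (simp add: Let_def)
lemma vtype_Ter_app: "nleaves a = length xs \<Longrightarrow> nleaves b = length ys \<Longrightarrow>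
   vtype (Ter a b c) (xs @ ys @ zs) = (vtype a xs \<and> (vtype b ys \<or> vtype c zs))"
  by (simp add: Let_def)
lemma anc_Ter_app: "nleaves a = length xs \<Longrightarrow> nleaves b = length ys \<Longrightarrow>
   anc (Ter a b c) (xs @ ys @ zs) = (if \<not> vtype b ys \<and> \<not> vtype c zs
     then nleaves a + nleaves b + anc c zs else anc a xs)"
  by (simp add: Let_def)

lemma split2: "length cs = m + n \<Longrightarrow> \<exists>xs ys. cs = xs @ ys \<and> length xs = m \<and> length ys = n"
  by (rule exI[of _ "take m cs"], rule exI[of _ "drop m cs"]) auto

lemma anc_vtype: "noO t \<Longrightarrow> length cs = nleaves t \<Longrightarrow> cs ! anc t cs \<Longrightarrow> vtype t cs"
proof (induction t arbitrary: cs)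
  case Leaf
  then show ?case by (cases cs) auto
next
  case (Bin a b)
  obtain xs ys where cs: "cs = xs @ ys" "length xs = nleaves a" "length ys = nleaves b"
    using split2[of cs "nleaves a" "nleaves b"] Bin.prems by auto
  have l: "anc a xs < nleaves a" using cs by (intro anc_lt) auto
  show ?case
  proof (cases "vtype b ys")
    case True
    have "xs ! anc a xs" using Bin.prems True l cs by (simp add: anc_Bin_app nth_append)
    then have "vtype a xs" using Bin cs by auto
    then show ?thesis using True cs by simp
  next
    case False
    have "ys ! anc b ys" using Bin.prems False cs by (simp add: anc_Bin_app nth_append)
    then have "vtype b ys" using Bin cs by auto
    then show ?thesis using False by simp
  qed
next
  case (Ter a b c)
  obtain xs w where cs: "cs = xs @ w" "length xs = nleaves a" "length w = nleaves b + nleaves c"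
    using split2[of cs "nleaves a" "nleaves b + nleaves c"] Ter.prems by auto
  obtain ys zs where w: "w = ys @ zs" "length ys = nleaves b" "length zs = nleaves c"
    using split2[OF cs(3)] by auto
  have l: "anc a xs < nleaves a" using cs by (intro anc_lt) auto
  show ?case
  proof (cases "\<not> vtype b ys \<and> \<not> vtype c zs")
    case True
    have "zs ! anc c zs" using Ter.prems True cs w by (simp add: anc_Ter_app nth_append)
    then have "vtype c zs" using Ter w by auto
    then show ?thesis using True by simp
  next
    case False
    have "xs ! anc a xs" using Ter.prems False l cs w by (simp add: anc_Ter_app nth_append)
    then have "vtype a xs" using Ter cs by auto
    then show ?thesis using False cs w by (simp add: vtype_Ter_app)
  qed
qed auto

lemma EE2: "EE p m (\<lambda>xs. EE p n (\<lambda>ys. f xs * g ys)) = EE p m f * EE p n g"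
  by (simp add: EE_cmult EE_multc)

lemma EE3: "EE p m (\<lambda>xs. EE p n (\<lambda>ys. EE p k (\<lambda>zs. f xs * g ys * h zs))) = EE p m f * EE p n g * EE p k h"
  by (simp add: EE_cmult EE_multc)

lemma EEaff: "EE p n (\<lambda>x. a + b * h x) = a + b * EE p n h"
  by (simp only: EE_plus EE_const EE_cmult)

lemma EE_lin3: "EE p m (\<lambda>xs. EE p n (\<lambda>ys. EE p k (\<lambda>zs. f xs * 1 * 1 - f xs * (1 - g ys) * (1 - h zs)))) =
   EE p m f * 1 * 1 - EE p m f * (1 - EE p n g) * (1 - EE p k h)"
proof -
  have i1: "EE p k (\<lambda>zs. f xs * 1 * 1 - f xs * (1 - g ys) * (1 - h zs)) = f xs - f xs * (1 - g ys) * (1 - EE p k h)" for xs ys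
  proof -
    have "EE p k (\<lambda>zs. f xs * 1 * 1 - f xs * (1 - g ys) * (1 - h zs)) =
          EE p k (\<lambda>zs. (f xs - f xs * (1 - g ys)) + (f xs * (1 - g ys)) * h zs)"
      by (rule EE_cong) (simp add: algebra_simps)
    also have "\<dots> = f xs - f xs * (1 - g ys) * (1 - EE p k h)"
      unfolding EEaff by (simp add: algebra_simps)
    finally show ?thesis .
  qed
  have i2: "EE p n (\<lambda>ys. f xs - f xs * (1 - g ys) * (1 - EE p k h)) = f xs - f xs * (1 - EE p n g) * (1 - EE p k h)" for xs
  proof -
    have "EE p n (\<lambda>ys. f xs - f xs * (1 - g ys) * (1 - EE p k h)) =
          EE p n (\<lambda>ys. (f xs - f xs * (1 - EE p k h)) + (f xs * (1 - EE p k h)) * g ys)"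
      by (rule EE_cong) (simp add: algebra_simps)
    also have "\<dots> = f xs - f xs * (1 - EE p n g) * (1 - EE p k h)"
      unfolding EEaff by (simp add: algebra_simps)
    finally show ?thesis .
  qed
  have i3: "EE p m (\<lambda>xs. f xs - f xs * (1 - EE p n g) * (1 - EE p k h)) = EE p m f * 1 * 1 - EE p m f * (1 - EE p n g) * (1 - EE p k h)"
  proof -
    have "EE p m (\<lambda>xs. f xs - f xs * (1 - EE p n g) * (1 - EE p k h)) =
          EE p m (\<lambda>xs. 0 + (1 - (1 - EE p n g) * (1 - EE p k h)) * f xs)"
      by (rule EE_cong) (simp add: algebra_simps)
    also have "\<dots> = EE p m f * 1 * 1 - EE p m f * (1 - EE p n g) * (1 - EE p k h)"
      unfolding EEaff by (simp add: algebra_simps)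
    finally show ?thesis .
  qed
  have s1: "EE p m (\<lambda>xs. EE p n (\<lambda>ys. EE p k (\<lambda>zs. f xs * 1 * 1 - f xs * (1 - g ys) * (1 - h zs)))) =
     EE p m (\<lambda>xs. EE p n (\<lambda>ys. f xs - f xs * (1 - g ys) * (1 - EE p k h)))"
    by (rule EE_cong, rule EE_cong, rule i1)
  have s2: "EE p m (\<lambda>xs. EE p n (\<lambda>ys. f xs - f xs * (1 - g ys) * (1 - EE p k h))) =
     EE p m (\<lambda>xs. f xs - f xs * (1 - EE p n g) * (1 - EE p k h))"
    by (rule EE_cong, rule i2)
  show ?thesis using trans[OF trans[OF s1 s2] i3] .
qed

lemma vp_Leaf: "vp p Leaf = p" and ap_Leaf: "ap p Leaf = p"
  by (simp_all add: vp_def ap_def EE_def L_one wt_def ind_def)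

lemma vp_MutX: "vp p (MutX a) = 1"
  by (simp add: vp_def ind_def EE_const)
lemma ap_MutX: "ap p (MutX a) = ap p a"
  by (simp add: ap_def)

lemma vp_Bin: "vp p (Bin a b) = vp p a * vp p b"
proof -
  have "vp p (Bin a b) = EE p (nleaves a) (\<lambda>xs. EE p (nleaves b) (\<lambda>ys. ind (vtype (Bin a b) (xs @ ys))))"
    by (simp only: vp_def nleaves.simps EE_add)
  also have "\<dots> = EE p (nleaves a) (\<lambda>xs. EE p (nleaves b) (\<lambda>ys. ind (vtype a xs) * ind (vtype b ys)))"
  proof (intro EE_cong)
    fix xs ys assume xs: "xs \<in> L (nleaves a)" and ys: "ys \<in> L (nleaves b)"
    have e: "vtype (Bin a b) (xs @ ys) = (vtype a xs \<and> vtype b ys)"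
      using xs by (intro vtype_Bin_app) (auto simp: L_def)
    show "ind (vtype (Bin a b) (xs @ ys)) = ind (vtype a xs) * ind (vtype b ys)"
      unfolding e by (simp add: ind_def)
  qed
  also have "\<dots> = vp p a * vp p b" by (simp add: EE2 vp_def)
  finally show ?thesis .
qed

lemma ap_Bin: assumes "noO b" shows "ap p (Bin a b) = ap p a * vp p b"
proof -
  have "ap p (Bin a b) = EE p (nleaves a) (\<lambda>xs. EE p (nleaves b) (\<lambda>ys. ind ((xs @ ys) ! anc (Bin a b) (xs @ ys))))"
    by (simp only: ap_def nleaves.simps EE_add)
  also have "\<dots> = EE p (nleaves a) (\<lambda>xs. EE p (nleaves b) (\<lambda>ys. ind (xs ! anc a xs) * ind (vtype b ys)))"
  proof (intro EE_cong)
    fix xs ys assume xs: "xs \<in> L (nleaves a)" and ys: "ys \<in> L (nleaves b)"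
    have l: "anc a xs < length xs" using xs anc_lt by (auto simp: L_def)
    have v: "ys ! anc b ys \<Longrightarrow> vtype b ys" using anc_vtype[OF assms] ys by (auto simp: L_def)
    show "ind ((xs @ ys) ! anc (Bin a b) (xs @ ys)) = ind (xs ! anc a xs) * ind (vtype b ys)"
    proof (cases "vtype b ys")
      case True
      have e: "(xs @ ys) ! anc (Bin a b) (xs @ ys) = xs ! anc a xs"
        using xs True l by (simp add: L_def anc_Bin_app nth_append)
      show ?thesis unfolding e using True by (simp add: ind_def)
    next
      case False
      have e: "(xs @ ys) ! anc (Bin a b) (xs @ ys) = ys ! anc b ys"
        using xs False by (simp add: L_def anc_Bin_app nth_append)
      show ?thesis unfolding e using False v by (auto simp: ind_def)
    qed
  qed
  also have "\<dots> = ap p a * vp p b" by (simp add: EE2 vp_def ap_def)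
  finally show ?thesis .
qed

lemma vp_Ter: "vp p (Ter a b c) = vp p a - vp p a * (1 - vp p b) * (1 - vp p c)"
proof -
  have "vp p (Ter a b c) = EE p (nleaves a) (\<lambda>xs. EE p (nleaves b) (\<lambda>ys. EE p (nleaves c)
          (\<lambda>zs. ind (vtype (Ter a b c) (xs @ ys @ zs)))))"
    by (simp only: vp_def nleaves.simps EE_add add.assoc)
  also have "\<dots> = EE p (nleaves a) (\<lambda>xs. EE p (nleaves b) (\<lambda>ys. EE p (nleaves c)
          (\<lambda>zs. ind (vtype a xs) * 1 * 1 - ind (vtype a xs) * (1 - ind (vtype b ys)) * (1 - ind (vtype c zs)))))"
  proof (intro EE_cong)
    fix xs ys zs assume xs: "xs \<in> L (nleaves a)" and ys: "ys \<in> L (nleaves b)" and zs: "zs \<in> L (nleaves c)"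
    have e: "vtype (Ter a b c) (xs @ ys @ zs) = (vtype a xs \<and> (vtype b ys \<or> vtype c zs))"
      using xs ys by (intro vtype_Ter_app) (auto simp: L_def)
    show "ind (vtype (Ter a b c) (xs @ ys @ zs)) = ind (vtype a xs) * 1 * 1 - ind (vtype a xs) * (1 - ind (vtype b ys)) * (1 - ind (vtype c zs))"
      unfolding e by (cases "vtype a xs"; cases "vtype b ys"; cases "vtype c zs") (simp_all add: ind_def)
  qed
  also have "\<dots> = vp p a * 1 * 1 - vp p a * (1 - vp p b) * (1 - vp p c)"
    unfolding vp_def by (rule EE_lin3)
  finally show ?thesis by (simp only: mult_1_right)
qed

lemma ap_Ter: assumes "noO c" shows "ap p (Ter a b c) = ap p a - ap p a * (1 - vp p b) * (1 - vp p c)"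
proof -
  have "ap p (Ter a b c) = EE p (nleaves a) (\<lambda>xs. EE p (nleaves b) (\<lambda>ys. EE p (nleaves c)
          (\<lambda>zs. ind ((xs @ ys @ zs) ! anc (Ter a b c) (xs @ ys @ zs)))))"
    by (simp only: ap_def nleaves.simps EE_add add.assoc)
  also have "\<dots> = EE p (nleaves a) (\<lambda>xs. EE p (nleaves b) (\<lambda>ys. EE p (nleaves c)
          (\<lambda>zs. ind (xs ! anc a xs) * 1 * 1 - ind (xs ! anc a xs) * (1 - ind (vtype b ys)) * (1 - ind (vtype c zs)))))"
  proof (intro EE_cong)
    fix xs ys zs assume xs: "xs \<in> L (nleaves a)" and ys: "ys \<in> L (nleaves b)" and zs: "zs \<in> L (nleaves c)"
    have l: "anc a xs < length xs" using xs anc_lt by (auto simp: L_def)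
    have v: "zs ! anc c zs \<Longrightarrow> vtype c zs" using anc_vtype[OF assms] zs by (auto simp: L_def)
    show "ind ((xs @ ys @ zs) ! anc (Ter a b c) (xs @ ys @ zs)) =
          ind (xs ! anc a xs) * 1 * 1 - ind (xs ! anc a xs) * (1 - ind (vtype b ys)) * (1 - ind (vtype c zs))"
      (is "?l = ?r")
    proof (cases "\<not> vtype b ys \<and> \<not> vtype c zs")
      case True
      have e: "(xs @ ys @ zs) ! anc (Ter a b c) (xs @ ys @ zs) = zs ! anc c zs"
        using xs ys True by (simp add: L_def anc_Ter_app nth_append)
      show ?thesis unfolding e using True v by (auto simp: ind_def)
    next
      case False
      have e: "(xs @ ys @ zs) ! anc (Ter a b c) (xs @ ys @ zs) = xs ! anc a xs"
        using xs ys False l by (auto simp: L_def anc_Ter_app nth_append)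
      show ?thesis unfolding e using False by (auto simp: ind_def)
    qed
  qed
  also have "\<dots> = ap p a * 1 * 1 - ap p a * (1 - vp p b) * (1 - vp p c)"
    unfolding vp_def ap_def by (rule EE_lin3)
  finally show ?thesis by (simp only: mult_1_right)
qed

lemma vp_range: "p \<in> {0..1} \<Longrightarrow> 0 \<le> vp p t \<and> vp p t \<le> 1"
  using EE_mono[of p "\<lambda>_. 0" "\<lambda>cs. ind (vtype t cs)" "nleaves t"]
        EE_mono[of p "\<lambda>cs. ind (vtype t cs)" "\<lambda>_. 1" "nleaves t"]
  by (auto simp: vp_def EE_const ind_def)

lemma ap_range: "p \<in> {0..1} \<Longrightarrow> 0 \<le> ap p t \<and> ap p t \<le> 1"
  using EE_mono[of p "\<lambda>_. 0" "\<lambda>cs. ind (cs ! anc t cs)" "nleaves t"]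
        EE_mono[of p "\<lambda>cs. ind (cs ! anc t cs)" "\<lambda>_. 1" "nleaves t"]
  by (auto simp: ap_def EE_const ind_def)

lemma integral_flip:
  fixes F :: "real \<Rightarrow> real"
  shows "integral {0..r} (\<lambda>\<tau>. F (r - \<tau>)) = integral {0..r} F"
proof -
  define H where "H = (\<lambda>x. F (r + x))"
  have "integral {0..r} (\<lambda>\<tau>. F (r - \<tau>)) = integral {-r..0} H"
    using Henstock_Kurzweil_Integration.integral_reflect_real[of 0 "-r" H] by (simp add: H_def)
  also have "\<dots> = integral {-r..0} (F \<circ> ((+) r))" by (simp add: H_def o_def)
  also have "\<dots> = integral {-r + r..0 + r} F" by (rule integral_shift_Icc_real)
  finally show ?thesis by simp
qed

locale asgp =
  fixes s g u p :: real
  assumes s: "s > 0" and g: "g \<ge> 0" and u: "u > 0" and p: "p \<in> {0..1}"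
begin

abbreviation "lam \<equiv> s + g + u"
abbreviation "P t r \<equiv> asg_prob s g u 0 1 t r"

lemma lam_pos: "lam > 0" using s g u by simp

lemma totrate_eq: "totrate s g u 0 1 = lam"
  by (simp add: totrate_def)

lemma fw_gen:
  assumes "r \<ge> 0"
  shows "integral {0..r} (\<lambda>\<tau>. c * exp (- lam * \<tau>) * k (r - \<tau>)) =
         exp (- lam * r) * integral {0..r} (\<lambda>\<sigma>. c * exp (lam * \<sigma>) * k \<sigma>)"
proof -
  define F where "F \<sigma> = exp (- lam * r) * (c * exp (lam * \<sigma>) * k \<sigma>)" for \<sigma>
  have e: "c * exp (- lam * \<tau>) * k (r - \<tau>) = F (r - \<tau>)" for \<tau>
  proof -
    have "exp (- lam * \<tau>) = exp (- lam * r) * exp (lam * (r - \<tau>))"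
      by (simp add: exp_add[symmetric] algebra_simps)
    then show ?thesis by (simp add: F_def)
  qed
  have "integral {0..r} (\<lambda>\<tau>. c * exp (- lam * \<tau>) * k (r - \<tau>)) = integral {0..r} (\<lambda>\<tau>. F (r - \<tau>))"
    by (simp only: e)
  also have "\<dots> = integral {0..r} F" by (rule integral_flip)
  also have "\<dots> = exp (- lam * r) * integral {0..r} (\<lambda>\<sigma>. c * exp (lam * \<sigma>) * k \<sigma>)"
    unfolding F_def by (rule integral_mult_right)
  finally show ?thesis .
qed

fun Q :: "asg \<Rightarrow> real \<Rightarrow> real" where
  "Q Leaf x = 0"
| "Q (Bin a b) x = s * (P a x * P b x)"
| "Q (Ter a b c) x = g * (P a x * P b x * P c x)"
| "Q (MutX a) x = u * P a x"
| "Q (MutO a) x = 0"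

definition init :: "asg \<Rightarrow> real" where "init t = (if t = Leaf then 1 else 0)"

lemma cont_int:
  assumes "continuous_on {0..R} h"
  shows "continuous_on {0..R} (\<lambda>r. exp (- lam * r) * integral {0..r} (\<lambda>\<sigma>. exp (lam * \<sigma>) * h \<sigma>))"
proof -
  have "continuous_on {0..R} (\<lambda>\<sigma>. exp (lam * \<sigma>) * h \<sigma>)"
    by (intro continuous_intros assms)
  then have "(\<lambda>\<sigma>. exp (lam * \<sigma>) * h \<sigma>) integrable_on {0..R}" by (rule integrable_continuous_real)
  then have "continuous_on {0..R} (\<lambda>r. integral {0..r} (\<lambda>\<sigma>. exp (lam * \<sigma>) * h \<sigma>))"
    by (rule indefinite_integral_continuous_1)
  then show ?thesis by (intro continuous_intros)
qed

lemma P_fw_cont: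
  "(\<forall>R. continuous_on {0..R} (P t)) \<and>
   (\<forall>r\<ge>0. P t r = exp (- lam * r) * (init t + integral {0..r} (\<lambda>\<sigma>. exp (lam * \<sigma>) * Q t \<sigma>)))"
proof (induction t)
  case Leaf
  show ?case by (auto simp: totrate_eq init_def intro!: continuous_intros)
next
  case (Bin a b)
  have fw: "\<forall>r\<ge>0. P (Bin a b) r = exp (- lam * r) * (init (Bin a b) + integral {0..r} (\<lambda>\<sigma>. exp (lam * \<sigma>) * Q (Bin a b) \<sigma>))"
  proof (intro allI impI)
    fix r :: real assume r: "r \<ge> 0"
    have "P (Bin a b) r = integral {0..r} (\<lambda>\<tau>. s * exp (- lam * \<tau>) * (\<lambda>x. P a x * P b x) (r - \<tau>))"
      by (simp add: totrate_eq mult.assoc)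
    also have "\<dots> = exp (- lam * r) * integral {0..r} (\<lambda>\<sigma>. s * exp (lam * \<sigma>) * (P a \<sigma> * P b \<sigma>))"
      by (rule fw_gen[OF r])
    also have "\<dots> = exp (- lam * r) * (init (Bin a b) + integral {0..r} (\<lambda>\<sigma>. exp (lam * \<sigma>) * Q (Bin a b) \<sigma>))"
      by (simp add: init_def mult.commute mult.left_commute)
    finally show "P (Bin a b) r = exp (- lam * r) * (init (Bin a b) + integral {0..r} (\<lambda>\<sigma>. exp (lam * \<sigma>) * Q (Bin a b) \<sigma>))" .
  qed
  have "continuous_on {0..R} (P (Bin a b))" for R
  proof -
    have "continuous_on {0..R} (Q (Bin a b))" using Bin.IH by (auto intro!: continuous_intros)
    then have "continuous_on {0..R} (\<lambda>r. exp (- lam * r) * integral {0..r} (\<lambda>\<sigma>. exp (lam * \<sigma>) * Q (Bin a b) \<sigma>))"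
      by (rule cont_int)
    then show ?thesis by (rule continuous_on_eq) (use fw in \<open>auto simp: init_def\<close>)
  qed
  with fw show ?case by blast
next
  case (Ter a b c)
  have fw: "\<forall>r\<ge>0. P (Ter a b c) r = exp (- lam * r) * (init (Ter a b c) + integral {0..r} (\<lambda>\<sigma>. exp (lam * \<sigma>) * Q (Ter a b c) \<sigma>))"
  proof (intro allI impI)
    fix r :: real assume r: "r \<ge> 0"
    have "P (Ter a b c) r = integral {0..r} (\<lambda>\<tau>. g * exp (- lam * \<tau>) * (\<lambda>x. P a x * P b x * P c x) (r - \<tau>))"
      by (simp add: totrate_eq mult.assoc)
    also have "\<dots> = exp (- lam * r) * integral {0..r} (\<lambda>\<sigma>. g * exp (lam * \<sigma>) * (P a \<sigma> * P b \<sigma> * P c \<sigma>))"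
      by (rule fw_gen[OF r])
    also have "\<dots> = exp (- lam * r) * (init (Ter a b c) + integral {0..r} (\<lambda>\<sigma>. exp (lam * \<sigma>) * Q (Ter a b c) \<sigma>))"
      by (simp add: init_def mult.commute mult.left_commute)
    finally show "P (Ter a b c) r = exp (- lam * r) * (init (Ter a b c) + integral {0..r} (\<lambda>\<sigma>. exp (lam * \<sigma>) * Q (Ter a b c) \<sigma>))" .
  qed
  have "continuous_on {0..R} (P (Ter a b c))" for R
  proof -
    have "continuous_on {0..R} (Q (Ter a b c))" using Ter.IH by (auto intro!: continuous_intros)
    then have "continuous_on {0..R} (\<lambda>r. exp (- lam * r) * integral {0..r} (\<lambda>\<sigma>. exp (lam * \<sigma>) * Q (Ter a b c) \<sigma>))"
      by (rule cont_int)
    then show ?thesis by (rule continuous_on_eq) (use fw in \<open>auto simp: init_def\<close>)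
  qed
  with fw show ?case by blast
next
  case (MutX a)
  have fw: "\<forall>r\<ge>0. P (MutX a) r = exp (- lam * r) * (init (MutX a) + integral {0..r} (\<lambda>\<sigma>. exp (lam * \<sigma>) * Q (MutX a) \<sigma>))"
  proof (intro allI impI)
    fix r :: real assume r: "r \<ge> 0"
    have "P (MutX a) r = integral {0..r} (\<lambda>\<tau>. u * exp (- lam * \<tau>) * P a (r - \<tau>))"
      by (simp add: totrate_eq)
    also have "\<dots> = exp (- lam * r) * integral {0..r} (\<lambda>\<sigma>. u * exp (lam * \<sigma>) * P a \<sigma>)"
      by (rule fw_gen[OF r])
    also have "\<dots> = exp (- lam * r) * (init (MutX a) + integral {0..r} (\<lambda>\<sigma>. exp (lam * \<sigma>) * Q (MutX a) \<sigma>))"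
      by (simp add: init_def mult.commute mult.left_commute)
    finally show "P (MutX a) r = exp (- lam * r) * (init (MutX a) + integral {0..r} (\<lambda>\<sigma>. exp (lam * \<sigma>) * Q (MutX a) \<sigma>))" .
  qed
  have "continuous_on {0..R} (P (MutX a))" for R
  proof -
    have "continuous_on {0..R} (Q (MutX a))" using MutX.IH by (auto intro!: continuous_intros)
    then have "continuous_on {0..R} (\<lambda>r. exp (- lam * r) * integral {0..r} (\<lambda>\<sigma>. exp (lam * \<sigma>) * Q (MutX a) \<sigma>))"
      by (rule cont_int)
    then show ?thesis by (rule continuous_on_eq) (use fw in \<open>auto simp: init_def\<close>)
  qed
  with fw show ?case by blast
next
  case (MutO a)
  show ?case by (simp add: init_def)
qed

lemma P_cont: "continuous_on {0..R} (P t)"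
  using P_fw_cont by blast

lemma Q_cont: "continuous_on {0..R} (Q t)"
  by (cases t) (auto intro!: continuous_intros P_cont)

lemma P_fw: assumes r: "r \<ge> 0"
  shows "exp (lam * r) * P t r = init t + integral {0..r} (\<lambda>\<sigma>. exp (lam * \<sigma>) * Q t \<sigma>)"
proof -
  have e: "P t r = exp (- lam * r) * (init t + integral {0..r} (\<lambda>\<sigma>. exp (lam * \<sigma>) * Q t \<sigma>))"
    using P_fw_cont[of t] r by blast
  have "exp (lam * r) * exp (- lam * r) = 1" by (simp add: exp_add[symmetric] algebra_simps)
  then show ?thesis unfolding e by (simp add: mult.assoc[symmetric])
qed

lemma P_nonneg: "r \<ge> 0 \<Longrightarrow> P t r \<ge> 0"
proof (induction t arbitrary: r)
  case Leaf then show ?case by simp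
next
  case (Bin a b)
  show ?case
  proof -
    have "0 \<le> integral {0..r} (\<lambda>\<sigma>. exp (lam * \<sigma>) * Q (Bin a b) \<sigma>)"
      by (intro integral_nonneg integrable_continuous_real continuous_intros Q_cont)
         (use Bin.IH s in \<open>auto intro!: mult_nonneg_nonneg\<close>)
    then show ?thesis using P_fw_cont[of "Bin a b"] Bin.prems by (auto simp: init_def)
  qed
next
  case (Ter a b c)
  show ?case
  proof -
    have "0 \<le> integral {0..r} (\<lambda>\<sigma>. exp (lam * \<sigma>) * Q (Ter a b c) \<sigma>)"
      by (intro integral_nonneg integrable_continuous_real continuous_intros Q_cont)
         (use Ter.IH g in \<open>auto intro!: mult_nonneg_nonneg\<close>)
    then show ?thesis using P_fw_cont[of "Ter a b c"] Ter.prems by (auto simp: init_def)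
  qed
next
  case (MutX a)
  show ?case
  proof -
    have "0 \<le> integral {0..r} (\<lambda>\<sigma>. exp (lam * \<sigma>) * Q (MutX a) \<sigma>)"
      by (intro integral_nonneg integrable_continuous_real continuous_intros Q_cont)
         (use MutX.IH u in \<open>auto intro!: mult_nonneg_nonneg\<close>)
    then show ?thesis using P_fw_cont[of "MutX a"] MutX.prems by (auto simp: init_def)
  qed
next
  case (MutO a) then show ?case by simp
qed

lemma P_noO: "\<not> noO t \<Longrightarrow> P t r = 0"
  by (induction t arbitrary: r) auto

end

definition Tstep :: "asg set \<Rightarrow> asg set" where
  "Tstep A = insert Leaf ((\<lambda>(a, b). Bin a b) ` (A \<times> A) \<union>
     (\<lambda>(a, b, c). Ter a b c) ` (A \<times> A \<times> A) \<union> MutX ` A)"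

fun T :: "nat \<Rightarrow> asg set" where
  "T 0 = {}"
| "T (Suc n) = Tstep (T n)"

lemma Tstep_mono: "A \<subseteq> B \<Longrightarrow> Tstep A \<subseteq> Tstep B"
  unfolding Tstep_def by (intro insert_mono Un_mono image_mono Sigma_mono) auto

lemma finite_T: "finite (T n)"
  by (induction n) (auto simp: Tstep_def)

lemma T_Suc_mono: "T n \<subseteq> T (Suc n)"
proof (induction n)
  case 0 then show ?case by simp
next
  case (Suc n) then show ?case using Tstep_mono[OF Suc.IH] by simp
qed

lemma T_mono: "m \<le> n \<Longrightarrow> T m \<subseteq> T n"
proof (induction n)
  case 0 then show ?case by simp
next
  case (Suc n)
  show ?case
  proof (cases "m = Suc n")
    case True then show ?thesis by simp
  next
    case False
    then have "m \<le> n" using Suc.prems by simp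
    then show ?thesis using Suc.IH T_Suc_mono[of n] by blast
  qed
qed

lemma T_noO: "t \<in> T n \<Longrightarrow> noO t"
  by (induction n arbitrary: t) (auto simp: Tstep_def)

lemma noO_T: "noO t \<Longrightarrow> \<exists>n. t \<in> T n"
proof (induction t)
  case Leaf
  have "Leaf \<in> T (Suc 0)" by (simp add: Tstep_def)
  then show ?case by blast
next
  case (Bin a b)
  then obtain n1 n2 where "a \<in> T n1" "b \<in> T n2" by auto
  then have "a \<in> T (max n1 n2)" "b \<in> T (max n1 n2)"
    using T_mono[of n1 "max n1 n2"] T_mono[of n2 "max n1 n2"] by auto
  then have "(a, b) \<in> T (max n1 n2) \<times> T (max n1 n2)" by blast
  then have "Bin a b \<in> (\<lambda>(a, b). Bin a b) ` (T (max n1 n2) \<times> T (max n1 n2))" by (rule rev_image_eqI) simp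
  then have "Bin a b \<in> T (Suc (max n1 n2))" unfolding T.simps Tstep_def by blast
  then show ?case by blast
next
  case (Ter a b c)
  then obtain n1 n2 n3 where "a \<in> T n1" "b \<in> T n2" "c \<in> T n3" by auto
  define N where "N = n1 + n2 + n3"
  have "T n1 \<subseteq> T N" "T n2 \<subseteq> T N" "T n3 \<subseteq> T N" by (auto intro!: T_mono simp: N_def)
  then have "a \<in> T N" "b \<in> T N" "c \<in> T N" using \<open>a \<in> T n1\<close> \<open>b \<in> T n2\<close> \<open>c \<in> T n3\<close> by blast+
  then have "(a, b, c) \<in> T N \<times> T N \<times> T N" by blast
  then have "Ter a b c \<in> (\<lambda>(a, b, c). Ter a b c) ` (T N \<times> T N \<times> T N)" by (rule rev_image_eqI) simp
  then have "Ter a b c \<in> T (Suc N)" unfolding T.simps Tstep_def by blast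
  then show ?case by blast
next
  case (MutX a)
  then obtain n where "a \<in> T n" by auto
  then have "MutX a \<in> T (Suc n)" unfolding T.simps Tstep_def by blast
  then show ?case by blast
next
  case (MutO a) then show ?case by simp
qed

lemma sum_T_Suc:
  "sum f (T (Suc n)) = f Leaf + (\<Sum>(a, b)\<in>T n \<times> T n. f (Bin a b))
     + (\<Sum>(a, b, c)\<in>T n \<times> T n \<times> T n. f (Ter a b c)) + (\<Sum>a\<in>T n. f (MutX a))"
proof -
  define B where "B = (\<lambda>(a, b). Bin a b) ` (T n \<times> T n)"
  define C where "C = (\<lambda>(a, b, c). Ter a b c) ` (T n \<times> T n \<times> T n)"
  define D where "D = MutX ` T n"
  have fin: "finite B" "finite C" "finite D" using finite_T by (auto simp: B_def C_def D_def)
  have "Leaf \<notin> B \<union> C \<union> D" by (auto simp: B_def C_def D_def)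
  moreover have "T (Suc n) = insert Leaf (B \<union> C \<union> D)" by (simp add: Tstep_def B_def C_def D_def)
  ultimately have "sum f (T (Suc n)) = f Leaf + sum f (B \<union> C \<union> D)"
    using fin by simp
  also have "sum f (B \<union> C \<union> D) = sum f B + sum f C + sum f D"
  proof -
    have d1: "B \<inter> C = {}" "(B \<union> C) \<inter> D = {}" by (auto simp: B_def C_def D_def)
    show ?thesis using fin by (simp add: sum.union_disjoint d1)
  qed
  also have "sum f B = (\<Sum>(a, b)\<in>T n \<times> T n. f (Bin a b))"
  proof -
    have inj: "inj_on (\<lambda>(a, b). Bin a b) (T n \<times> T n)" by (auto simp: inj_on_def)
    show ?thesis unfolding B_def sum.reindex[OF inj] by (simp add: o_def split_def)
  qed
  also have "sum f C = (\<Sum>(a, b, c)\<in>T n \<times> T n \<times> T n. f (Ter a b c))"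
  proof -
    have inj: "inj_on (\<lambda>(a, b, c). Ter a b c) (T n \<times> T n \<times> T n)" by (auto simp: inj_on_def)
    show ?thesis unfolding C_def sum.reindex[OF inj] by (simp add: o_def split_def)
  qed
  also have "sum f D = (\<Sum>a\<in>T n. f (MutX a))"
    unfolding D_def by (simp add: sum.reindex inj_on_def)
  finally show ?thesis by (simp add: add.assoc)
qed

lemma sum_pairs: fixes f h :: "_ \<Rightarrow> real" shows "(\<Sum>(x, y)\<in>A \<times> B. f x * h y) = sum f A * sum h B"
proof -
  have "sum f A * sum h B = (\<Sum>x\<in>A. \<Sum>y\<in>B. f x * h y)" by (rule sum_product)
  also have "\<dots> = (\<Sum>(x, y)\<in>A \<times> B. f x * h y)" by (rule sum.cartesian_product)
  finally show ?thesis by simp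
qed

context asgp
begin

definition Sm :: "asg set \<Rightarrow> (asg \<Rightarrow> real) \<Rightarrow> real \<Rightarrow> real" where
  "Sm A \<phi> \<sigma> = (\<Sum>t\<in>A. P t \<sigma> * \<phi> t)"

lemma Sm_cont: "finite A \<Longrightarrow> continuous_on {0..R} (Sm A \<phi>)"
  unfolding Sm_def by (intro continuous_intros P_cont)

lemma sum_fw:
  assumes A: "finite A" and r: "r \<ge> 0"
  shows "exp (lam * r) * Sm A \<phi> r = (\<Sum>t\<in>A. init t * \<phi> t)
          + integral {0..r} (\<lambda>\<sigma>. exp (lam * \<sigma>) * (\<Sum>t\<in>A. Q t \<sigma> * \<phi> t))"
proof -
  have ig: "(\<lambda>\<sigma>. exp (lam * \<sigma>) * Q t \<sigma> * \<phi> t) integrable_on {0..r}" for t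
    by (intro integrable_continuous_real continuous_intros Q_cont)
  have "exp (lam * r) * Sm A \<phi> r = (\<Sum>t\<in>A. (exp (lam * r) * P t r) * \<phi> t)"
    by (simp add: Sm_def sum_distrib_left mult.assoc)
  also have "\<dots> = (\<Sum>t\<in>A. init t * \<phi> t + integral {0..r} (\<lambda>\<sigma>. exp (lam * \<sigma>) * Q t \<sigma> * \<phi> t))"
    by (intro sum.cong refl) (unfold P_fw[OF r] integral_mult_left, rule distrib_right)
  also have "\<dots> = (\<Sum>t\<in>A. init t * \<phi> t) + integral {0..r} (\<lambda>\<sigma>. \<Sum>t\<in>A. exp (lam * \<sigma>) * Q t \<sigma> * \<phi> t)"
    by (simp add: sum.distrib integral_sum[OF A ig])
  also have "(\<lambda>\<sigma>. \<Sum>t\<in>A. exp (lam * \<sigma>) * Q t \<sigma> * \<phi> t) = (\<lambda>\<sigma>. exp (lam * \<sigma>) * (\<Sum>t\<in>A. Q t \<sigma> * \<phi> t))"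
    by (simp add: sum_distrib_left mult.assoc)
  finally show ?thesis .
qed

lemma init_T: "(\<Sum>t\<in>T (Suc n). init t * \<phi> t) = \<phi> Leaf"
  by (subst sum_T_Suc) (simp add: init_def case_prod_beta)

lemma Q_T: "(\<Sum>t\<in>T (Suc n). Q t \<sigma> * \<phi> t) =
   s * (\<Sum>(a, b)\<in>T n \<times> T n. P a \<sigma> * P b \<sigma> * \<phi> (Bin a b))
 + g * (\<Sum>(a, b, c)\<in>T n \<times> T n \<times> T n. P a \<sigma> * P b \<sigma> * P c \<sigma> * \<phi> (Ter a b c))
 + u * (\<Sum>a\<in>T n. P a \<sigma> * \<phi> (MutX a))"
  by (subst sum_T_Suc) (simp add: case_prod_beta sum_distrib_left mult.assoc)

lemma prod2: "(\<Sum>(a, b)\<in>A \<times> A. P a \<sigma> * P b \<sigma> * (\<alpha> a * \<beta> b)) = Sm A \<alpha> \<sigma> * Sm A \<beta> \<sigma>"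
proof -
  have "(\<Sum>(a, b)\<in>A \<times> A. P a \<sigma> * P b \<sigma> * (\<alpha> a * \<beta> b)) = (\<Sum>(a, b)\<in>A \<times> A. (P a \<sigma> * \<alpha> a) * (P b \<sigma> * \<beta> b))"
    by (intro sum.cong refl) (auto simp: mult_ac)
  also have "\<dots> = Sm A \<alpha> \<sigma> * Sm A \<beta> \<sigma>" unfolding Sm_def by (rule sum_pairs)
  finally show ?thesis .
qed

lemma prod3: "(\<Sum>(a, b, c)\<in>A \<times> A \<times> A. P a \<sigma> * P b \<sigma> * P c \<sigma> * (\<alpha> a * \<beta> b * \<gamma> c)) = Sm A \<alpha> \<sigma> * Sm A \<beta> \<sigma> * Sm A \<gamma> \<sigma>"
proof -
  have "(\<Sum>(a, b, c)\<in>A \<times> A \<times> A. P a \<sigma> * P b \<sigma> * P c \<sigma> * (\<alpha> a * \<beta> b * \<gamma> c)) =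
        (\<Sum>(a, bc)\<in>A \<times> (A \<times> A). (P a \<sigma> * \<alpha> a) * (\<lambda>(b, c). (P b \<sigma> * \<beta> b) * (P c \<sigma> * \<gamma> c)) bc)"
    by (intro sum.cong refl) (auto simp: mult_ac)
  also have "\<dots> = Sm A \<alpha> \<sigma> * (\<Sum>(b, c)\<in>A \<times> A. (P b \<sigma> * \<beta> b) * (P c \<sigma> * \<gamma> c))"
    unfolding Sm_def by (rule sum_pairs)
  also have "(\<Sum>(b, c)\<in>A \<times> A. (P b \<sigma> * \<beta> b) * (P c \<sigma> * \<gamma> c)) = Sm A \<beta> \<sigma> * Sm A \<gamma> \<sigma>"
    unfolding Sm_def by (rule sum_pairs)
  finally show ?thesis by (simp add: mult.assoc)
qed

end

context asgp
begin

lemma fw_Suc: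
  assumes r: "r \<ge> 0"
  shows "exp (lam * r) * Sm (T (Suc n)) \<phi> r = \<phi> Leaf + integral {0..r} (\<lambda>\<sigma>. exp (lam * \<sigma>) *
     (s * (\<Sum>(a, b)\<in>T n \<times> T n. P a \<sigma> * P b \<sigma> * \<phi> (Bin a b))
    + g * (\<Sum>(a, b, c)\<in>T n \<times> T n \<times> T n. P a \<sigma> * P b \<sigma> * P c \<sigma> * \<phi> (Ter a b c))
    + u * (\<Sum>a\<in>T n. P a \<sigma> * \<phi> (MutX a))))"
  using sum_fw[OF finite_T r, of "Suc n" \<phi>] by (simp only: init_T Q_T)

abbreviation "Mn n \<equiv> Sm (T n) (\<lambda>_. 1)"
abbreviation "Yn n \<equiv> Sm (T n) (vp p)"
abbreviation "Xn n \<equiv> Sm (T n) (\<lambda>t. 1 - vp p t)"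
abbreviation "Gn n \<equiv> Sm (T n) (ap p)"

lemma vp01: "0 \<le> vp p t" "vp p t \<le> 1" using vp_range[OF p] by auto
lemma ap01: "0 \<le> ap p t" "ap p t \<le> 1" using ap_range[OF p] by auto

lemma MYX: "Mn n \<sigma> = Yn n \<sigma> + Xn n \<sigma>"
  unfolding Sm_def by (simp add: sum.distrib[symmetric] algebra_simps)

lemma EM:
  assumes r: "r \<ge> 0"
  shows "exp (lam * r) * Mn (Suc n) r = 1 + integral {0..r} (\<lambda>\<sigma>. exp (lam * \<sigma>) *
     (s * (Mn n \<sigma> * Mn n \<sigma>) + g * (Mn n \<sigma> * Mn n \<sigma> * Mn n \<sigma>) + u * Mn n \<sigma>))"
proof -
  have "(\<Sum>(a, b)\<in>T n \<times> T n. P a \<sigma> * P b \<sigma> * 1) = Mn n \<sigma> * Mn n \<sigma>" for \<sigma>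
    using prod2[where A="T n" and \<sigma>=\<sigma> and \<alpha>="\<lambda>_. 1" and \<beta>="\<lambda>_. 1"] by simp
  moreover have "(\<Sum>(a, b, c)\<in>T n \<times> T n \<times> T n. P a \<sigma> * P b \<sigma> * P c \<sigma> * 1) = Mn n \<sigma> * Mn n \<sigma> * Mn n \<sigma>" for \<sigma>
    using prod3[where A="T n" and \<sigma>=\<sigma> and \<alpha>="\<lambda>_. 1" and \<beta>="\<lambda>_. 1" and \<gamma>="\<lambda>_. 1"] by simp
  moreover have "(\<Sum>a\<in>T n. P a \<sigma> * 1) = Mn n \<sigma>" for \<sigma> by (simp add: Sm_def)
  ultimately show ?thesis using fw_Suc[OF r, of n "\<lambda>_. 1"] by simp
qed

lemma EY:
  assumes r: "r \<ge> 0"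
  shows "exp (lam * r) * Yn (Suc n) r = p + integral {0..r} (\<lambda>\<sigma>. exp (lam * \<sigma>) *
     (s * (Yn n \<sigma> * Yn n \<sigma>) + g * (Yn n \<sigma> * Yn n \<sigma> * (Mn n \<sigma> + Xn n \<sigma>)) + u * Mn n \<sigma>))"
proof -
  have "(\<Sum>(a, b)\<in>T n \<times> T n. P a \<sigma> * P b \<sigma> * vp p (Bin a b)) = Yn n \<sigma> * Yn n \<sigma>" for \<sigma>
    using prod2[where A="T n" and \<sigma>=\<sigma> and \<alpha>="vp p" and \<beta>="vp p"] by (simp add: vp_Bin)
  moreover have "(\<Sum>(a, b, c)\<in>T n \<times> T n \<times> T n. P a \<sigma> * P b \<sigma> * P c \<sigma> * vp p (Ter a b c)) =
      Yn n \<sigma> * Yn n \<sigma> * (Mn n \<sigma> + Xn n \<sigma>)" for \<sigma>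
  proof -
    have "(\<Sum>(a, b, c)\<in>T n \<times> T n \<times> T n. P a \<sigma> * P b \<sigma> * P c \<sigma> * vp p (Ter a b c)) =
      (\<Sum>(a, b, c)\<in>T n \<times> T n \<times> T n. P a \<sigma> * P b \<sigma> * P c \<sigma> * (vp p a * 1 * 1)
        - P a \<sigma> * P b \<sigma> * P c \<sigma> * (vp p a * (1 - vp p b) * (1 - vp p c)))"
      by (intro sum.cong refl) (auto simp: vp_Ter algebra_simps)
    also have "\<dots> = (\<Sum>(a, b, c)\<in>T n \<times> T n \<times> T n. P a \<sigma> * P b \<sigma> * P c \<sigma> * (vp p a * 1 * 1))
    - (\<Sum>(a, b, c)\<in>T n \<times> T n \<times> T n. P a \<sigma> * P b \<sigma> * P c \<sigma> * (vp p a * (1 - vp p b) * (1 - vp p c)))"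
      by (simp add: sum_subtractf[symmetric] case_prod_beta)
    also have "\<dots> = Yn n \<sigma> * Mn n \<sigma> * Mn n \<sigma> - Yn n \<sigma> * Xn n \<sigma> * Xn n \<sigma>"
      by (simp only: prod3)
    also have "\<dots> = Yn n \<sigma> * Yn n \<sigma> * (Mn n \<sigma> + Xn n \<sigma>)"
      unfolding MYX[of n \<sigma>] by (simp add: algebra_simps)
    finally show ?thesis .
  qed
  moreover have "(\<Sum>a\<in>T n. P a \<sigma> * vp p (MutX a)) = Mn n \<sigma>" for \<sigma> by (simp add: Sm_def vp_MutX)
  ultimately show ?thesis using fw_Suc[OF r, of n "vp p"] by (simp add: vp_Leaf)
qed

lemma EG:
  assumes r: "r \<ge> 0"
  shows "exp (lam * r) * Gn (Suc n) r = p + integral {0..r} (\<lambda>\<sigma>. exp (lam * \<sigma>) *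
     (s * (Gn n \<sigma> * Yn n \<sigma>) + g * (Gn n \<sigma> * Yn n \<sigma> * (Mn n \<sigma> + Xn n \<sigma>)) + u * Gn n \<sigma>))"
proof -
  have "(\<Sum>(a, b)\<in>T n \<times> T n. P a \<sigma> * P b \<sigma> * ap p (Bin a b)) = Gn n \<sigma> * Yn n \<sigma>" for \<sigma>
  proof -
    have "(\<Sum>(a, b)\<in>T n \<times> T n. P a \<sigma> * P b \<sigma> * ap p (Bin a b)) = (\<Sum>(a, b)\<in>T n \<times> T n. P a \<sigma> * P b \<sigma> * (ap p a * vp p b))"
      by (intro sum.cong refl) (auto simp: ap_Bin T_noO)
    then show ?thesis using prod2[where A="T n" and \<sigma>=\<sigma> and \<alpha>="ap p" and \<beta>="vp p"] by simp
  qed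
  moreover have "(\<Sum>(a, b, c)\<in>T n \<times> T n \<times> T n. P a \<sigma> * P b \<sigma> * P c \<sigma> * ap p (Ter a b c)) =
      Gn n \<sigma> * Yn n \<sigma> * (Mn n \<sigma> + Xn n \<sigma>)" for \<sigma>
  proof -
    have "(\<Sum>(a, b, c)\<in>T n \<times> T n \<times> T n. P a \<sigma> * P b \<sigma> * P c \<sigma> * ap p (Ter a b c)) =
      (\<Sum>(a, b, c)\<in>T n \<times> T n \<times> T n. P a \<sigma> * P b \<sigma> * P c \<sigma> * (ap p a * 1 * 1)
        - P a \<sigma> * P b \<sigma> * P c \<sigma> * (ap p a * (1 - vp p b) * (1 - vp p c)))"
      by (intro sum.cong refl) (auto simp: ap_Ter T_noO algebra_simps)
    also have "\<dots> = (\<Sum>(a, b, c)\<in>T n \<times> T n \<times> T n. P a \<sigma> * P b \<sigma> * P c \<sigma> * (ap p a * 1 * 1))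
    - (\<Sum>(a, b, c)\<in>T n \<times> T n \<times> T n. P a \<sigma> * P b \<sigma> * P c \<sigma> * (ap p a * (1 - vp p b) * (1 - vp p c)))"
      by (simp add: sum_subtractf[symmetric] case_prod_beta)
    also have "\<dots> = Gn n \<sigma> * Mn n \<sigma> * Mn n \<sigma> - Gn n \<sigma> * Xn n \<sigma> * Xn n \<sigma>"
      by (simp only: prod3)
    also have "\<dots> = Gn n \<sigma> * Yn n \<sigma> * (Mn n \<sigma> + Xn n \<sigma>)"
      unfolding MYX[of n \<sigma>] by (simp add: algebra_simps)
    finally show ?thesis .
  qed
  moreover have "(\<Sum>a\<in>T n. P a \<sigma> * ap p (MutX a)) = Gn n \<sigma>" for \<sigma> by (simp add: Sm_def ap_MutX)
  ultimately show ?thesis using fw_Suc[OF r, of n "ap p"] by (simp add: ap_Leaf)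
qed

end

lemma infsum_lim_T:
  fixes f :: "asg \<Rightarrow> real"
  assumes nn: "\<And>t. 0 \<le> f t" and z: "\<And>t. \<not> noO t \<Longrightarrow> f t = 0" and bd: "\<And>n. sum f (T n) \<le> B"
  shows "(\<lambda>n. sum f (T n)) \<longlonglongrightarrow> infsum f UNIV"
proof -
  define A where "A = {t. noO t}"
  have sub: "\<exists>N. F \<subseteq> T N" if "finite F" "F \<subseteq> A" for F
    using that
  proof (induction F rule: finite_induct)
    case empty then show ?case by simp
  next
    case (insert t F)
    then obtain N where N: "F \<subseteq> T N" by auto
    obtain n where n: "t \<in> T n" using noO_T insert.prems by (auto simp: A_def)
    have "insert t F \<subseteq> T (max n N)"
      using N n T_mono[of n "max n N"] T_mono[of N "max n N"] by auto
    then show ?case by blast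
  qed
  have TA: "T n \<subseteq> A" for n using T_noO by (auto simp: A_def)
  have sumA: "f summable_on A"
  proof (rule nonneg_bdd_above_summable_on)
    show "0 \<le> f x" for x by (rule nn)
    show "bdd_above (sum f ` {F. F \<subseteq> A \<and> finite F})"
    proof (rule bdd_aboveI2)
      fix F assume "F \<in> {F. F \<subseteq> A \<and> finite F}"
      then have F: "F \<subseteq> A" "finite F" by auto
      then obtain N where "F \<subseteq> T N" using sub by blast
      then have "sum f F \<le> sum f (T N)" using finite_T nn by (intro sum_mono2) auto
      then show "sum f F \<le> B" using bd[of N] by linarith
    qed
  qed
  have hs: "(sum f \<longlongrightarrow> infsum f A) (finite_subsets_at_top A)"
    using has_sum_infsum[OF sumA] by (simp add: has_sum_def)
  have fl: "filterlim T (finite_subsets_at_top A) sequentially"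
    unfolding filterlim_finite_subsets_at_top
  proof (intro allI impI)
    fix X assume "finite X \<and> X \<subseteq> A"
    then obtain N where N: "X \<subseteq> T N" using sub by blast
    show "\<forall>\<^sub>F n in sequentially. finite (T n) \<and> X \<subseteq> T n \<and> T n \<subseteq> A"
      unfolding eventually_sequentially
      using N T_mono[of N] finite_T TA by blast
  qed
  have "((\<lambda>n. sum f (T n)) \<longlongrightarrow> infsum f A) sequentially"
    using filterlim_compose[OF hs fl] by simp
  moreover have "infsum f A = infsum f UNIV"
    by (rule infsum_cong_neutral) (auto simp: A_def z)
  ultimately show ?thesis by simp
qed

lemma lim_eq:
  fixes f :: "nat \<Rightarrow> real \<Rightarrow> real"
  assumes c: "\<And>n. C (Suc n) = a + integral {0..r} (f n)"
    and int: "\<And>n. f n integrable_on {0..r}"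
    and mono: "\<And>n x. x \<in> {0..r} \<Longrightarrow> f n x \<le> f (Suc n) x"
    and lim: "\<And>x. x \<in> {0..r} \<Longrightarrow> (\<lambda>n. f n x) \<longlonglongrightarrow> F x"
    and bnd: "\<And>n x. x \<in> {0..r} \<Longrightarrow> 0 \<le> f n x \<and> f n x \<le> K"
    and conv: "C \<longlonglongrightarrow> c0"
  shows "c0 = a + integral {0..r} F \<and> F integrable_on {0..r}"
proof -
  have b: "bounded (range (\<lambda>k. integral {0..r} (f k)))"
  proof -
    have "\<bar>integral {0..r} (f k)\<bar> \<le> integral {0..r} (\<lambda>_. K)" for k
    proof -
      have "0 \<le> integral {0..r} (f k)" using int bnd by (intro integral_nonneg) auto
      moreover have "integral {0..r} (f k) \<le> integral {0..r} (\<lambda>_. K)"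
        using int bnd by (intro integral_le) auto
      ultimately show ?thesis by simp
    qed
    then show ?thesis unfolding bounded_iff by (auto simp del: integral_const_real)
  qed
  have mc: "F integrable_on {0..r} \<and> (\<lambda>k. integral {0..r} (f k)) \<longlonglongrightarrow> integral {0..r} F"
    by (rule monotone_convergence_increasing[OF int mono lim b])
  have "(\<lambda>n. C (Suc n)) \<longlonglongrightarrow> a + integral {0..r} F"
    unfolding c using mc by (intro tendsto_intros) auto
  moreover have "(\<lambda>n. C (Suc n)) \<longlonglongrightarrow> c0" using conv by (rule LIMSEQ_Suc)
  ultimately have "c0 = a + integral {0..r} F" using LIMSEQ_unique by blast
  with mc show ?thesis by blast
qed

lemma ode_zero:
  fixes D q :: "real \<Rightarrow> real"
  assumes R: "R \<ge> 0"
    and d: "\<And>x. x \<in> {0..R} \<Longrightarrow> (D has_real_derivative (q x * D x)) (at x within {0..R})"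
    and qc: "continuous_on {0..R} q"
    and D0: "D 0 = 0"
  shows "\<And>x. x \<in> {0..R} \<Longrightarrow> D x = 0"
proof -
  define W where "W x = D x * exp (- integral {0..x} q)" for x
  have "(W has_real_derivative 0) (at x within {0..R})" if x: "x \<in> {0..R}" for x
  proof -
    have iq: "((\<lambda>x. integral {0..x} q) has_real_derivative q x) (at x within {0..R})"
      by (rule integral_has_real_derivative[OF qc x])
    have "(W has_real_derivative (q x * D x) * exp (- integral {0..x} q) + (exp (- integral {0..x} q) * (- q x)) * D x)
           (at x within {0..R})"
    proof -
      have e: "((\<lambda>x. exp (- integral {0..x} q)) has_real_derivative exp (- integral {0..x} q) * (- q x)) (at x within {0..R})"
        by (rule derivative_eq_intros iq refl)+
      show ?thesis unfolding W_def by (rule DERIV_mult[OF d[OF x] e])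
    qed
    then show ?thesis by (simp add: algebra_simps)
  qed
  then obtain c where c: "\<forall>x\<in>{0..R}. W x = c"
    using has_field_derivative_zero_constant[of "{0..R}" W] by auto
  have "W 0 = 0" by (simp add: W_def D0)
  then have "c = 0" using c R by auto
  fix x assume "x \<in> {0..R}"
  then have "W x = 0" using c \<open>c = 0\<close> by auto
  then show "D x = 0" by (simp add: W_def)
qed

lemma mono_prod: "0 \<le> (a::real) \<Longrightarrow> a \<le> a' \<Longrightarrow> 0 \<le> b \<Longrightarrow> b \<le> b' \<Longrightarrow> a * b \<le> a' * b'"
  by (metis mult_mono order_trans)

context asgp
begin

lemma Sm_nonneg: "\<sigma> \<ge> 0 \<Longrightarrow> (\<And>t. 0 \<le> \<phi> t) \<Longrightarrow> 0 \<le> Sm A \<phi> \<sigma>"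
  unfolding Sm_def by (intro sum_nonneg mult_nonneg_nonneg P_nonneg) auto

lemma Sm_le: "\<sigma> \<ge> 0 \<Longrightarrow> (\<And>t. \<phi> t \<le> \<psi> t) \<Longrightarrow> Sm A \<phi> \<sigma> \<le> Sm A \<psi> \<sigma>"
  unfolding Sm_def by (intro sum_mono mult_left_mono P_nonneg) auto

lemma Sm_Suc: "\<sigma> \<ge> 0 \<Longrightarrow> (\<And>t. 0 \<le> \<phi> t) \<Longrightarrow> Sm (T n) \<phi> \<sigma> \<le> Sm (T (Suc n)) \<phi> \<sigma>"
  unfolding Sm_def by (intro sum_mono2 finite_T T_Suc_mono mult_nonneg_nonneg P_nonneg) auto

lemma exp_int: assumes "r \<ge> 0" shows "integral {0..r} (\<lambda>\<sigma>. exp (lam * \<sigma>) * lam) = exp (lam * r) - 1"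
proof -
  have "((\<lambda>\<sigma>. exp (lam * \<sigma>) * lam) has_integral (exp (lam * r) - exp (lam * 0))) {0..r}"
  proof (rule fundamental_theorem_of_calculus[OF assms])
    fix x :: real assume "x \<in> {0..r}"
    have "((\<lambda>\<sigma>. exp (lam * \<sigma>)) has_real_derivative exp (lam * x) * lam) (at x within {0..r})"
      by (auto intro!: derivative_eq_intros)
    then show "((\<lambda>\<sigma>. exp (lam * \<sigma>)) has_vector_derivative exp (lam * x) * lam) (at x within {0..r})"
      by (simp add: has_real_derivative_iff_has_vector_derivative)
  qed
  then have "integral {0..r} (\<lambda>\<sigma>. exp (lam * \<sigma>) * lam) = exp (lam * r) - exp (lam * 0)"
    by (rule integral_unique)
  then show ?thesis by simp
qed

lemma M01: "\<sigma> \<ge> 0 \<Longrightarrow> 0 \<le> Mn n \<sigma> \<and> Mn n \<sigma> \<le> 1"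
proof (induction n arbitrary: \<sigma>)
  case 0 then show ?case by (simp add: Sm_def)
next
  case (Suc n)
  define h where "h \<sigma> = exp (lam * \<sigma>) * (s * (Mn n \<sigma> * Mn n \<sigma>) + g * (Mn n \<sigma> * Mn n \<sigma> * Mn n \<sigma>) + u * Mn n \<sigma>)" for \<sigma>
  have "integral {0..\<sigma>} h \<le> integral {0..\<sigma>} (\<lambda>\<sigma>. exp (lam * \<sigma>) * lam)"
  proof (rule integral_le)
    show "h integrable_on {0..\<sigma>}" unfolding h_def
      by (intro integrable_continuous_real continuous_intros Sm_cont finite_T)
    show "(\<lambda>\<sigma>. exp (lam * \<sigma>) * lam) integrable_on {0..\<sigma>}"
      by (intro integrable_continuous_real continuous_intros)
    fix x assume x: "x \<in> {0..\<sigma>}"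
    then have m: "0 \<le> Mn n x" "Mn n x \<le> 1" using Suc.IH[of x] by auto
    have "Mn n x * Mn n x \<le> 1" using m by (simp add: mult_le_one)
    moreover have "Mn n x * Mn n x * Mn n x \<le> 1" using m by (simp add: mult_le_one)
    ultimately have "s * (Mn n x * Mn n x) + g * (Mn n x * Mn n x * Mn n x) + u * Mn n x \<le> s + g + u"
      using m s g u by (intro add_mono mult_left_le) auto
    then show "h x \<le> exp (lam * x) * lam" unfolding h_def by (intro mult_left_mono) auto
  qed
  then have "exp (lam * \<sigma>) * Mn (Suc n) \<sigma> \<le> exp (lam * \<sigma>) * 1"
    using EM[OF Suc.prems, of n] exp_int[OF Suc.prems] unfolding h_def by simp
  then have "Mn (Suc n) \<sigma> \<le> 1" by (simp add: mult_le_cancel_left_pos)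
  moreover have "0 \<le> Mn (Suc n) \<sigma>" using Suc.prems by (intro Sm_nonneg) auto
  ultimately show ?case by simp
qed

lemma Sm01: assumes "\<sigma> \<ge> 0" "\<And>t. 0 \<le> \<phi> t" "\<And>t. \<phi> t \<le> 1"
  shows "0 \<le> Sm A \<phi> \<sigma>" "Sm (T n) \<phi> \<sigma> \<le> 1"
proof -
  show "0 \<le> Sm A \<phi> \<sigma>" using assms by (intro Sm_nonneg) auto
  have "Sm (T n) \<phi> \<sigma> \<le> Mn n \<sigma>" using assms by (intro Sm_le) auto
  then show "Sm (T n) \<phi> \<sigma> \<le> 1" using M01[OF assms(1), of n] by linarith
qed

definition Lim :: "(asg \<Rightarrow> real) \<Rightarrow> real \<Rightarrow> real" where
  "Lim \<phi> \<sigma> = infsum (\<lambda>t. P t \<sigma> * \<phi> t) UNIV"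

lemma conv: assumes "\<sigma> \<ge> 0" "\<And>t. 0 \<le> \<phi> t" "\<And>t. \<phi> t \<le> 1"
  shows "(\<lambda>n. Sm (T n) \<phi> \<sigma>) \<longlonglongrightarrow> Lim \<phi> \<sigma>"
  unfolding Sm_def Lim_def
proof (rule infsum_lim_T)
  show "0 \<le> P t \<sigma> * \<phi> t" for t using assms P_nonneg by auto
  show "\<not> noO t \<Longrightarrow> P t \<sigma> * \<phi> t = 0" for t by (simp add: P_noO)
  show "(\<Sum>t\<in>T n. P t \<sigma> * \<phi> t) \<le> 1" for n using Sm01(2)[OF assms, of n] by (simp add: Sm_def)
qed

abbreviation "Mi \<equiv> Lim (\<lambda>_. 1)"
abbreviation "Yi \<equiv> Lim (vp p)"
abbreviation "Xi \<equiv> Lim (\<lambda>t. 1 - vp p t)"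
abbreviation "Gi \<equiv> Lim (ap p)"

lemma convM: "\<sigma> \<ge> 0 \<Longrightarrow> (\<lambda>n. Mn n \<sigma>) \<longlonglongrightarrow> Mi \<sigma>" by (rule conv) auto
lemma convY: "\<sigma> \<ge> 0 \<Longrightarrow> (\<lambda>n. Yn n \<sigma>) \<longlonglongrightarrow> Yi \<sigma>" by (rule conv) (auto simp: vp01)
lemma convX: "\<sigma> \<ge> 0 \<Longrightarrow> (\<lambda>n. Xn n \<sigma>) \<longlonglongrightarrow> Xi \<sigma>" by (rule conv) (auto simp: vp01)
lemma convG: "\<sigma> \<ge> 0 \<Longrightarrow> (\<lambda>n. Gn n \<sigma>) \<longlonglongrightarrow> Gi \<sigma>" by (rule conv) (auto simp: ap01)

lemma MiYX: "\<sigma> \<ge> 0 \<Longrightarrow> Mi \<sigma> = Yi \<sigma> + Xi \<sigma>"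
proof -
  assume "\<sigma> \<ge> 0"
  then have "(\<lambda>n. Mn n \<sigma>) \<longlonglongrightarrow> Yi \<sigma> + Xi \<sigma>" unfolding MYX by (intro tendsto_add convY convX)
  then show ?thesis using convM[OF \<open>\<sigma> \<ge> 0\<close>] LIMSEQ_unique by blast
qed

lemma bounds: "\<sigma> \<ge> 0 \<Longrightarrow> 0 \<le> Mn n \<sigma> \<and> Mn n \<sigma> \<le> 1 \<and> 0 \<le> Yn n \<sigma> \<and> Yn n \<sigma> \<le> 1 \<and> 0 \<le> Xn n \<sigma> \<and> Xn n \<sigma> \<le> 1
   \<and> 0 \<le> Gn n \<sigma> \<and> Gn n \<sigma> \<le> 1"
  using Sm01(1)[of \<sigma> "\<lambda>_. 1" "T n"] Sm01(1)[of \<sigma> "vp p" "T n"] Sm01(1)[of \<sigma> "\<lambda>t. 1 - vp p t" "T n"]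
    Sm01(1)[of \<sigma> "ap p" "T n"]
    Sm01(2)[of \<sigma> "\<lambda>_. 1" n] Sm01(2)[of \<sigma> "vp p" n] Sm01(2)[of \<sigma> "\<lambda>t. 1 - vp p t" n]
    Sm01(2)[of \<sigma> "ap p" n] vp01 ap01 by auto

lemma monoS: "\<sigma> \<ge> 0 \<Longrightarrow> Mn n \<sigma> \<le> Mn (Suc n) \<sigma> \<and> Yn n \<sigma> \<le> Yn (Suc n) \<sigma> \<and> Xn n \<sigma> \<le> Xn (Suc n) \<sigma>
   \<and> Gn n \<sigma> \<le> Gn (Suc n) \<sigma>"
  using Sm_Suc[of \<sigma> "\<lambda>_. 1" n] Sm_Suc[of \<sigma> "vp p" n] Sm_Suc[of \<sigma> "\<lambda>t. 1 - vp p t" n]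
    Sm_Suc[of \<sigma> "ap p" n] vp01 ap01 by auto

end

context asgp
begin

lemma exp_le_lam: "\<sigma> \<le> \<rho> \<Longrightarrow> exp (lam * \<sigma>) \<le> exp (lam * \<rho>)"
  using lam_pos by (simp add: mult_left_mono)

lemma lim_app:
  assumes \<rho>: "\<rho> \<ge> 0"
    and eqn: "\<And>n. exp (lam * \<rho>) * Z (Suc n) = a + integral {0..\<rho>} (\<lambda>\<sigma>. exp (lam * \<sigma>) * h n \<sigma>)"
    and hc: "\<And>n. continuous_on {0..\<rho>} (h n)"
    and hmono: "\<And>n \<sigma>. \<sigma> \<in> {0..\<rho>} \<Longrightarrow> h n \<sigma> \<le> h (Suc n) \<sigma>"
    and hbnd: "\<And>n \<sigma>. \<sigma> \<in> {0..\<rho>} \<Longrightarrow> 0 \<le> h n \<sigma> \<and> h n \<sigma> \<le> K"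
    and hlim: "\<And>\<sigma>. \<sigma> \<in> {0..\<rho>} \<Longrightarrow> (\<lambda>n. h n \<sigma>) \<longlonglongrightarrow> H \<sigma>"
    and Zlim: "Z \<longlonglongrightarrow> Zl"
  shows "exp (lam * \<rho>) * Zl = a + integral {0..\<rho>} (\<lambda>\<sigma>. exp (lam * \<sigma>) * H \<sigma>) \<and>
         (\<lambda>\<sigma>. exp (lam * \<sigma>) * H \<sigma>) integrable_on {0..\<rho>}"
proof (rule lim_eq[where C = "\<lambda>n. exp (lam * \<rho>) * Z n" and f = "\<lambda>n \<sigma>. exp (lam * \<sigma>) * h n \<sigma>"
      and K = "exp (lam * \<rho>) * K"])
  show "exp (lam * \<rho>) * Z (Suc n) = a + integral {0..\<rho>} (\<lambda>\<sigma>. exp (lam * \<sigma>) * h n \<sigma>)" for n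
    by (rule eqn)
  show "(\<lambda>\<sigma>. exp (lam * \<sigma>) * h n \<sigma>) integrable_on {0..\<rho>}" for n
    by (intro integrable_continuous_real continuous_intros hc)
  show "exp (lam * x) * h n x \<le> exp (lam * x) * h (Suc n) x" if "x \<in> {0..\<rho>}" for n x
    using hmono[OF that] by (intro mult_left_mono) auto
  show "(\<lambda>n. exp (lam * x) * h n x) \<longlonglongrightarrow> exp (lam * x) * H x" if "x \<in> {0..\<rho>}" for x
    using hlim[OF that] by (intro tendsto_intros)
  show "0 \<le> exp (lam * x) * h n x \<and> exp (lam * x) * h n x \<le> exp (lam * \<rho>) * K" if x: "x \<in> {0..\<rho>}" for n x
    using hbnd[OF x] exp_le_lam[of x \<rho>] x by (auto intro!: mono_prod)
  show "(\<lambda>n. exp (lam * \<rho>) * Z n) \<longlonglongrightarrow> exp (lam * \<rho>) * Zl"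
    using Zlim by (intro tendsto_intros)
qed

lemma IM:
  assumes \<rho>: "\<rho> \<ge> 0"
  shows "exp (lam * \<rho>) * Mi \<rho> = 1 + integral {0..\<rho>} (\<lambda>\<sigma>. exp (lam * \<sigma>) *
           (s * (Mi \<sigma> * Mi \<sigma>) + g * (Mi \<sigma> * Mi \<sigma> * Mi \<sigma>) + u * Mi \<sigma>)) \<and>
         (\<lambda>\<sigma>. exp (lam * \<sigma>) * (s * (Mi \<sigma> * Mi \<sigma>) + g * (Mi \<sigma> * Mi \<sigma> * Mi \<sigma>) + u * Mi \<sigma>)) integrable_on {0..\<rho>}"
proof (rule lim_app[OF \<rho>, where Z = "\<lambda>n. Mn n \<rho>" and K = "s + g + u"])
  show "exp (lam * \<rho>) * Mn (Suc n) \<rho> = 1 + integral {0..\<rho>} (\<lambda>\<sigma>. exp (lam * \<sigma>) *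
           (s * (Mn n \<sigma> * Mn n \<sigma>) + g * (Mn n \<sigma> * Mn n \<sigma> * Mn n \<sigma>) + u * Mn n \<sigma>))" for n
    by (rule EM[OF \<rho>])
  show "continuous_on {0..\<rho>} (\<lambda>\<sigma>. s * (Mn n \<sigma> * Mn n \<sigma>) + g * (Mn n \<sigma> * Mn n \<sigma> * Mn n \<sigma>) + u * Mn n \<sigma>)" for n
    by (intro continuous_intros Sm_cont finite_T)
  fix n \<sigma> assume "\<sigma> \<in> {0..\<rho>}"
  then have \<sigma>: "\<sigma> \<ge> 0" by simp
  have b: "0 \<le> Mn n \<sigma>" "Mn n \<sigma> \<le> 1" and m: "Mn n \<sigma> \<le> Mn (Suc n) \<sigma>" using bounds[OF \<sigma>] monoS[OF \<sigma>] by auto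
  show "s * (Mn n \<sigma> * Mn n \<sigma>) + g * (Mn n \<sigma> * Mn n \<sigma> * Mn n \<sigma>) + u * Mn n \<sigma>
     \<le> s * (Mn (Suc n) \<sigma> * Mn (Suc n) \<sigma>) + g * (Mn (Suc n) \<sigma> * Mn (Suc n) \<sigma> * Mn (Suc n) \<sigma>) + u * Mn (Suc n) \<sigma>"
    using b m s g u by (intro add_mono mult_left_mono mono_prod) auto
  have "Mn n \<sigma> * Mn n \<sigma> \<le> 1" "Mn n \<sigma> * Mn n \<sigma> * Mn n \<sigma> \<le> 1" using b by (auto intro: mult_le_one)
  then show "0 \<le> s * (Mn n \<sigma> * Mn n \<sigma>) + g * (Mn n \<sigma> * Mn n \<sigma> * Mn n \<sigma>) + u * Mn n \<sigma> \<and>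
      s * (Mn n \<sigma> * Mn n \<sigma>) + g * (Mn n \<sigma> * Mn n \<sigma> * Mn n \<sigma>) + u * Mn n \<sigma> \<le> s + g + u"
    using b s g u by (auto intro!: add_mono add_nonneg_nonneg mult_nonneg_nonneg mult_left_le)
next
  fix \<sigma> assume "\<sigma> \<in> {0..\<rho>}"
  then have \<sigma>: "\<sigma> \<ge> 0" by simp
  show "(\<lambda>n. s * (Mn n \<sigma> * Mn n \<sigma>) + g * (Mn n \<sigma> * Mn n \<sigma> * Mn n \<sigma>) + u * Mn n \<sigma>) \<longlonglongrightarrow>
     s * (Mi \<sigma> * Mi \<sigma>) + g * (Mi \<sigma> * Mi \<sigma> * Mi \<sigma>) + u * Mi \<sigma>"
    using convM[OF \<sigma>] by (intro tendsto_intros)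
next
  show "(\<lambda>n. Mn n \<rho>) \<longlonglongrightarrow> Mi \<rho>" using convM[OF \<rho>] .
qed

lemma IY:
  assumes \<rho>: "\<rho> \<ge> 0"
  shows "exp (lam * \<rho>) * Yi \<rho> = p + integral {0..\<rho>} (\<lambda>\<sigma>. exp (lam * \<sigma>) *
           (s * (Yi \<sigma> * Yi \<sigma>) + g * (Yi \<sigma> * Yi \<sigma> * (Mi \<sigma> + Xi \<sigma>)) + u * Mi \<sigma>)) \<and>
         (\<lambda>\<sigma>. exp (lam * \<sigma>) * (s * (Yi \<sigma> * Yi \<sigma>) + g * (Yi \<sigma> * Yi \<sigma> * (Mi \<sigma> + Xi \<sigma>)) + u * Mi \<sigma>)) integrable_on {0..\<rho>}"
proof (rule lim_app[OF \<rho>, where Z = "\<lambda>n. Yn n \<rho>" and K = "s + g * 2 + u"])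
  show "exp (lam * \<rho>) * Yn (Suc n) \<rho> = p + integral {0..\<rho>} (\<lambda>\<sigma>. exp (lam * \<sigma>) *
           (s * (Yn n \<sigma> * Yn n \<sigma>) + g * (Yn n \<sigma> * Yn n \<sigma> * (Mn n \<sigma> + Xn n \<sigma>)) + u * Mn n \<sigma>))" for n
    by (rule EY[OF \<rho>])
  show "continuous_on {0..\<rho>} (\<lambda>\<sigma>. s * (Yn n \<sigma> * Yn n \<sigma>) + g * (Yn n \<sigma> * Yn n \<sigma> * (Mn n \<sigma> + Xn n \<sigma>)) + u * Mn n \<sigma>)" for n
    by (intro continuous_intros Sm_cont finite_T)
  fix n \<sigma> assume "\<sigma> \<in> {0..\<rho>}"
  then have \<sigma>: "\<sigma> \<ge> 0" by simp
  have b: "0 \<le> Mn n \<sigma>" "Mn n \<sigma> \<le> 1" "0 \<le> Yn n \<sigma>" "Yn n \<sigma> \<le> 1" "0 \<le> Xn n \<sigma>" "Xn n \<sigma> \<le> 1"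
    and m: "Mn n \<sigma> \<le> Mn (Suc n) \<sigma>" "Yn n \<sigma> \<le> Yn (Suc n) \<sigma>" "Xn n \<sigma> \<le> Xn (Suc n) \<sigma>"
    using bounds[OF \<sigma>] monoS[OF \<sigma>] by auto
  show "s * (Yn n \<sigma> * Yn n \<sigma>) + g * (Yn n \<sigma> * Yn n \<sigma> * (Mn n \<sigma> + Xn n \<sigma>)) + u * Mn n \<sigma>
     \<le> s * (Yn (Suc n) \<sigma> * Yn (Suc n) \<sigma>) + g * (Yn (Suc n) \<sigma> * Yn (Suc n) \<sigma> * (Mn (Suc n) \<sigma> + Xn (Suc n) \<sigma>)) + u * Mn (Suc n) \<sigma>"
    using b m s g u by (intro add_mono mult_left_mono mono_prod) auto
  have "Yn n \<sigma> * Yn n \<sigma> \<le> 1" using b by (auto intro: mult_le_one)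
  moreover have "Mn n \<sigma> + Xn n \<sigma> \<le> 2" using b by simp
  ultimately have "Yn n \<sigma> * Yn n \<sigma> * (Mn n \<sigma> + Xn n \<sigma>) \<le> 1 * 2" using b by (intro mono_prod) auto
  then show "0 \<le> s * (Yn n \<sigma> * Yn n \<sigma>) + g * (Yn n \<sigma> * Yn n \<sigma> * (Mn n \<sigma> + Xn n \<sigma>)) + u * Mn n \<sigma> \<and>
      s * (Yn n \<sigma> * Yn n \<sigma>) + g * (Yn n \<sigma> * Yn n \<sigma> * (Mn n \<sigma> + Xn n \<sigma>)) + u * Mn n \<sigma> \<le> s + g * 2 + u"
    using b s g u \<open>Yn n \<sigma> * Yn n \<sigma> \<le> 1\<close>
    by (auto intro!: add_mono add_nonneg_nonneg mult_nonneg_nonneg mult_left_le mult_left_mono)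
next
  fix \<sigma> assume "\<sigma> \<in> {0..\<rho>}"
  then have \<sigma>: "\<sigma> \<ge> 0" by simp
  show "(\<lambda>n. s * (Yn n \<sigma> * Yn n \<sigma>) + g * (Yn n \<sigma> * Yn n \<sigma> * (Mn n \<sigma> + Xn n \<sigma>)) + u * Mn n \<sigma>) \<longlonglongrightarrow>
     s * (Yi \<sigma> * Yi \<sigma>) + g * (Yi \<sigma> * Yi \<sigma> * (Mi \<sigma> + Xi \<sigma>)) + u * Mi \<sigma>"
    using convM[OF \<sigma>] convY[OF \<sigma>] convX[OF \<sigma>] by (intro tendsto_intros)
next
  show "(\<lambda>n. Yn n \<rho>) \<longlonglongrightarrow> Yi \<rho>" using convY[OF \<rho>] .
qed

lemma IG:
  assumes \<rho>: "\<rho> \<ge> 0"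
  shows "exp (lam * \<rho>) * Gi \<rho> = p + integral {0..\<rho>} (\<lambda>\<sigma>. exp (lam * \<sigma>) *
           (s * (Gi \<sigma> * Yi \<sigma>) + g * (Gi \<sigma> * Yi \<sigma> * (Mi \<sigma> + Xi \<sigma>)) + u * Gi \<sigma>)) \<and>
         (\<lambda>\<sigma>. exp (lam * \<sigma>) * (s * (Gi \<sigma> * Yi \<sigma>) + g * (Gi \<sigma> * Yi \<sigma> * (Mi \<sigma> + Xi \<sigma>)) + u * Gi \<sigma>)) integrable_on {0..\<rho>}"
proof (rule lim_app[OF \<rho>, where Z = "\<lambda>n. Gn n \<rho>" and K = "s + g * 2 + u"])
  show "exp (lam * \<rho>) * Gn (Suc n) \<rho> = p + integral {0..\<rho>} (\<lambda>\<sigma>. exp (lam * \<sigma>) *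
           (s * (Gn n \<sigma> * Yn n \<sigma>) + g * (Gn n \<sigma> * Yn n \<sigma> * (Mn n \<sigma> + Xn n \<sigma>)) + u * Gn n \<sigma>))" for n
    by (rule EG[OF \<rho>])
  show "continuous_on {0..\<rho>} (\<lambda>\<sigma>. s * (Gn n \<sigma> * Yn n \<sigma>) + g * (Gn n \<sigma> * Yn n \<sigma> * (Mn n \<sigma> + Xn n \<sigma>)) + u * Gn n \<sigma>)" for n
    by (intro continuous_intros Sm_cont finite_T)
  fix n \<sigma> assume "\<sigma> \<in> {0..\<rho>}"
  then have \<sigma>: "\<sigma> \<ge> 0" by simp
  have b: "0 \<le> Mn n \<sigma>" "Mn n \<sigma> \<le> 1" "0 \<le> Yn n \<sigma>" "Yn n \<sigma> \<le> 1" "0 \<le> Xn n \<sigma>" "Xn n \<sigma> \<le> 1"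
      "0 \<le> Gn n \<sigma>" "Gn n \<sigma> \<le> 1"
    and m: "Mn n \<sigma> \<le> Mn (Suc n) \<sigma>" "Yn n \<sigma> \<le> Yn (Suc n) \<sigma>" "Xn n \<sigma> \<le> Xn (Suc n) \<sigma>"
      "Gn n \<sigma> \<le> Gn (Suc n) \<sigma>"
    using bounds[OF \<sigma>] monoS[OF \<sigma>] by auto
  show "s * (Gn n \<sigma> * Yn n \<sigma>) + g * (Gn n \<sigma> * Yn n \<sigma> * (Mn n \<sigma> + Xn n \<sigma>)) + u * Gn n \<sigma>
     \<le> s * (Gn (Suc n) \<sigma> * Yn (Suc n) \<sigma>) + g * (Gn (Suc n) \<sigma> * Yn (Suc n) \<sigma> * (Mn (Suc n) \<sigma> + Xn (Suc n) \<sigma>)) + u * Gn (Suc n) \<sigma>"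
    using b m s g u by (intro add_mono mult_left_mono mono_prod) auto
  have "Gn n \<sigma> * Yn n \<sigma> \<le> 1" using b by (auto intro: mult_le_one)
  moreover have "Mn n \<sigma> + Xn n \<sigma> \<le> 2" using b by simp
  ultimately have "Gn n \<sigma> * Yn n \<sigma> * (Mn n \<sigma> + Xn n \<sigma>) \<le> 1 * 2" using b by (intro mono_prod) auto
  then show "0 \<le> s * (Gn n \<sigma> * Yn n \<sigma>) + g * (Gn n \<sigma> * Yn n \<sigma> * (Mn n \<sigma> + Xn n \<sigma>)) + u * Gn n \<sigma> \<and>
      s * (Gn n \<sigma> * Yn n \<sigma>) + g * (Gn n \<sigma> * Yn n \<sigma> * (Mn n \<sigma> + Xn n \<sigma>)) + u * Gn n \<sigma> \<le> s + g * 2 + u"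
    using b s g u \<open>Gn n \<sigma> * Yn n \<sigma> \<le> 1\<close>
    by (auto intro!: add_mono add_nonneg_nonneg mult_nonneg_nonneg mult_left_le mult_left_mono)
next
  fix \<sigma> assume "\<sigma> \<in> {0..\<rho>}"
  then have \<sigma>: "\<sigma> \<ge> 0" by simp
  show "(\<lambda>n. s * (Gn n \<sigma> * Yn n \<sigma>) + g * (Gn n \<sigma> * Yn n \<sigma> * (Mn n \<sigma> + Xn n \<sigma>)) + u * Gn n \<sigma>) \<longlonglongrightarrow>
     s * (Gi \<sigma> * Yi \<sigma>) + g * (Gi \<sigma> * Yi \<sigma> * (Mi \<sigma> + Xi \<sigma>)) + u * Gi \<sigma>"
    using convM[OF \<sigma>] convY[OF \<sigma>] convX[OF \<sigma>] convG[OF \<sigma>] by (intro tendsto_intros)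
next
  show "(\<lambda>n. Gn n \<rho>) \<longlonglongrightarrow> Gi \<rho>" using convG[OF \<rho>] .
qed

end

context asgp
begin

lemma exp_inv: "exp (- lam * x) * exp (lam * x) = 1"
  by (simp add: exp_add[symmetric] algebra_simps)

lemma Z_eq:
  assumes "exp (lam * \<rho>) * Z \<rho> = c"
  shows "Z \<rho> = exp (- lam * \<rho>) * c"
proof -
  have "exp (- lam * \<rho>) * c = (exp (- lam * \<rho>) * exp (lam * \<rho>)) * Z \<rho>"
    unfolding assms[symmetric] by (simp add: mult.assoc)
  then show ?thesis by (simp only: exp_inv mult_1_left)
qed

lemma cont_from_int:
  assumes R: "R \<ge> 0"
    and eq: "\<And>\<rho>. \<rho> \<in> {0..R} \<Longrightarrow> exp (lam * \<rho>) * Z \<rho> = a + integral {0..\<rho>} f"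
    and int: "f integrable_on {0..R}"
  shows "continuous_on {0..R} Z"
proof -
  have "continuous_on {0..R} (\<lambda>\<rho>. exp (- lam * \<rho>) * (a + integral {0..\<rho>} f))"
    by (intro continuous_intros indefinite_integral_continuous_1 int)
  then show ?thesis
  proof (rule continuous_on_eq)
    fix x assume x: "x \<in> {0..R}"
    show "exp (- lam * x) * (a + integral {0..x} f) = Z x" using Z_eq[where Z=Z and \<rho>=x, OF eq[OF x]] by simp
  qed
qed

lemma deriv_from_int:
  assumes R: "R \<ge> 0"
    and eq: "\<And>\<rho>. \<rho> \<in> {0..R} \<Longrightarrow> exp (lam * \<rho>) * Z \<rho> = a + integral {0..\<rho>} (\<lambda>\<sigma>. exp (lam * \<sigma>) * h \<sigma>)"
    and hc: "continuous_on {0..R} h"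
    and \<rho>: "\<rho> \<in> {0..R}"
  shows "(Z has_real_derivative (- lam * Z \<rho> + h \<rho>)) (at \<rho> within {0..R})"
proof -
  define V where "V x = exp (- lam * x) * (a + integral {0..x} (\<lambda>\<sigma>. exp (lam * \<sigma>) * h \<sigma>))" for x
  have fc: "continuous_on {0..R} (\<lambda>\<sigma>. exp (lam * \<sigma>) * h \<sigma>)" by (intro continuous_intros hc)
  have dI: "((\<lambda>x. integral {0..x} (\<lambda>\<sigma>. exp (lam * \<sigma>) * h \<sigma>)) has_real_derivative exp (lam * \<rho>) * h \<rho>) (at \<rho> within {0..R})"
    by (rule integral_has_real_derivative[OF fc \<rho>])
  have dE: "((\<lambda>x. exp (- lam * x)) has_real_derivative exp (- lam * \<rho>) * (- lam)) (at \<rho> within {0..R})"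
    by (rule derivative_eq_intros refl)+ simp
  have dA: "((\<lambda>x. a + integral {0..x} (\<lambda>\<sigma>. exp (lam * \<sigma>) * h \<sigma>)) has_real_derivative exp (lam * \<rho>) * h \<rho>) (at \<rho> within {0..R})"
    using DERIV_add[OF DERIV_const[of a] dI] by simp
  have "(V has_real_derivative (exp (- lam * \<rho>) * (- lam)) * (a + integral {0..\<rho>} (\<lambda>\<sigma>. exp (lam * \<sigma>) * h \<sigma>))
        + (exp (lam * \<rho>) * h \<rho>) * exp (- lam * \<rho>)) (at \<rho> within {0..R})"
    unfolding V_def by (rule DERIV_mult[OF dE dA])
  moreover have "(exp (- lam * \<rho>) * (- lam)) * (a + integral {0..\<rho>} (\<lambda>\<sigma>. exp (lam * \<sigma>) * h \<sigma>))
        + (exp (lam * \<rho>) * h \<rho>) * exp (- lam * \<rho>) = - lam * Z \<rho> + h \<rho>"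
  proof -
    have "Z \<rho> = V \<rho>" using Z_eq[where Z=Z and \<rho>=\<rho>, OF eq[OF \<rho>]] by (simp add: V_def)
    moreover have "exp (lam * \<rho>) * h \<rho> * exp (- lam * \<rho>) = h \<rho>"
      using exp_inv[of \<rho>] by (simp add: algebra_simps)
    ultimately show ?thesis by (simp add: V_def algebra_simps)
  qed
  ultimately have dV: "(V has_real_derivative (- lam * Z \<rho> + h \<rho>)) (at \<rho> within {0..R})" by simp
  show ?thesis
  proof (rule has_field_derivative_transform_within[OF dV zero_less_one \<rho>])
    fix x assume "x \<in> {0..R}" "dist x \<rho> < 1"
    then show "V x = Z x" using Z_eq[where Z=Z and \<rho>=x, OF eq] by (simp add: V_def)
  qed
qed

end

context asgp
begin

lemma main_loc:
  fixes r :: real and y :: "real \<Rightarrow> real"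
  assumes r: "r \<ge> 0" and y0: "y 0 = p"
    and dy: "\<forall>\<xi>\<in>{0..r}. (y has_real_derivative
           (- y \<xi> * (1 - y \<xi>) * (s + g * (1 - y \<xi>)) + u * (1 - y \<xi>))) (at \<xi> within {0..r})"
  shows "Gi r = p * exp (- integral {0..r} (\<lambda>\<xi>. (1 - y \<xi>) * (s + g * (1 - y \<xi>))))"
proof -
  define hM where "hM \<sigma> = s * (Mi \<sigma> * Mi \<sigma>) + g * (Mi \<sigma> * Mi \<sigma> * Mi \<sigma>) + u * Mi \<sigma>" for \<sigma>
  define hY where "hY \<sigma> = s * (Yi \<sigma> * Yi \<sigma>) + g * (Yi \<sigma> * Yi \<sigma> * (Mi \<sigma> + Xi \<sigma>)) + u * Mi \<sigma>" for \<sigma>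
  define hG where "hG \<sigma> = s * (Gi \<sigma> * Yi \<sigma>) + g * (Gi \<sigma> * Yi \<sigma> * (Mi \<sigma> + Xi \<sigma>)) + u * Gi \<sigma>" for \<sigma>
  have eqM: "\<And>\<rho>. \<rho> \<in> {0..r} \<Longrightarrow> exp (lam * \<rho>) * Mi \<rho> = 1 + integral {0..\<rho>} (\<lambda>\<sigma>. exp (lam * \<sigma>) * hM \<sigma>)"
    using IM unfolding hM_def by auto
  have eqY: "\<And>\<rho>. \<rho> \<in> {0..r} \<Longrightarrow> exp (lam * \<rho>) * Yi \<rho> = p + integral {0..\<rho>} (\<lambda>\<sigma>. exp (lam * \<sigma>) * hY \<sigma>)"
    using IY unfolding hY_def by auto
  have eqG: "\<And>\<rho>. \<rho> \<in> {0..r} \<Longrightarrow> exp (lam * \<rho>) * Gi \<rho> = p + integral {0..\<rho>} (\<lambda>\<sigma>. exp (lam * \<sigma>) * hG \<sigma>)"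
    using IG unfolding hG_def by auto
  have iM: "(\<lambda>\<sigma>. exp (lam * \<sigma>) * hM \<sigma>) integrable_on {0..r}"
    unfolding hM_def by (rule conjunct2[OF IM[OF r]])
  have cM: "continuous_on {0..r} Mi"
    by (rule cont_from_int[OF r eqM iM])
  have iY: "(\<lambda>\<sigma>. exp (lam * \<sigma>) * hY \<sigma>) integrable_on {0..r}"
    unfolding hY_def by (rule conjunct2[OF IY[OF r]])
  have cY: "continuous_on {0..r} Yi"
    by (rule cont_from_int[OF r eqY iY])
  have iG: "(\<lambda>\<sigma>. exp (lam * \<sigma>) * hG \<sigma>) integrable_on {0..r}"
    unfolding hG_def by (rule conjunct2[OF IG[OF r]])
  have cG: "continuous_on {0..r} Gi"
    by (rule cont_from_int[OF r eqG iG])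
  have cX: "continuous_on {0..r} Xi"
  proof -
    have "continuous_on {0..r} (\<lambda>\<sigma>. Mi \<sigma> - Yi \<sigma>)" by (intro continuous_intros cM cY)
    then show ?thesis by (rule continuous_on_eq) (use MiYX in auto)
  qed
  have hMc: "continuous_on {0..r} hM" unfolding hM_def by (intro continuous_intros cM)
  have dM: "(Mi has_real_derivative (- lam * Mi x + hM x)) (at x within {0..r})" if "x \<in> {0..r}" for x
    by (rule deriv_from_int[OF r _ hMc that]) (rule eqM)
  have hYc: "continuous_on {0..r} hY" unfolding hY_def by (intro continuous_intros cM cY cX)
  have dY: "(Yi has_real_derivative (- lam * Yi x + hY x)) (at x within {0..r})" if "x \<in> {0..r}" for x
    by (rule deriv_from_int[OF r _ hYc that]) (rule eqY)
  have hGc: "continuous_on {0..r} hG" unfolding hG_def by (intro continuous_intros cM cY cX cG)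
  have dG: "(Gi has_real_derivative (- lam * Gi x + hG x)) (at x within {0..r})" if "x \<in> {0..r}" for x
    by (rule deriv_from_int[OF r _ hGc that]) (rule eqG)
  have M0: "Mi 0 = 1" using eqM[of 0] r by simp
  have Y0: "Yi 0 = p" using eqY[of 0] r by simp
  have G0: "Gi 0 = p" using eqG[of 0] r by simp
  have M1: "Mi x = 1" if "x \<in> {0..r}" for x
  proof -
    have "(\<lambda>x. Mi x - 1) x = 0"
    proof (rule ode_zero[OF r, where D = "\<lambda>x. Mi x - 1" and q = "\<lambda>x. Mi x * (s + g * (1 + Mi x))"])
      fix x assume x: "x \<in> {0..r}"
      have "((\<lambda>x. Mi x - 1) has_real_derivative (- lam * Mi x + hM x) - 0) (at x within {0..r})"
        by (rule DERIV_diff[OF dM[OF x] DERIV_const])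
      moreover have "(- lam * Mi x + hM x) - 0 = Mi x * (s + g * (1 + Mi x)) * (Mi x - 1)"
        unfolding hM_def by algebra
      ultimately show "((\<lambda>x. Mi x - 1) has_real_derivative Mi x * (s + g * (1 + Mi x)) * (Mi x - 1)) (at x within {0..r})"
        by simp
    next
      show "continuous_on {0..r} (\<lambda>x. Mi x * (s + g * (1 + Mi x)))" by (intro continuous_intros cM)
    next
      show "Mi 0 - 1 = 0" using M0 by simp
    qed (use that in auto)
    then show ?thesis by simp
  qed
  have X1: "Xi x = 1 - Yi x" if "x \<in> {0..r}" for x using MiYX[of x] M1[OF that] that by auto
  have cy: "continuous_on {0..r} y" by (rule DERIV_continuous_on) (use dy in blast)
  have Yy: "Yi x = y x" if "x \<in> {0..r}" for x
  proof -
    define q where "q x = - (s + g + u) + s * (Yi x + y x) + 2 * g * (Yi x + y x) - g * (Yi x * Yi x + Yi x * y x + y x * y x)" for x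
    have "(\<lambda>x. Yi x - y x) x = 0"
    proof (rule ode_zero[OF r, where D = "\<lambda>x. Yi x - y x" and q = q])
      fix x assume x: "x \<in> {0..r}"
      have "((\<lambda>x. Yi x - y x) has_real_derivative (- lam * Yi x + hY x) - (- y x * (1 - y x) * (s + g * (1 - y x)) + u * (1 - y x)))
         (at x within {0..r})"
        using dy x by (intro DERIV_diff dY) auto
      moreover have "(- lam * Yi x + hY x) - (- y x * (1 - y x) * (s + g * (1 - y x)) + u * (1 - y x)) = q x * (Yi x - y x)"
        unfolding hY_def q_def M1[OF x] X1[OF x] by algebra
      ultimately show "((\<lambda>x. Yi x - y x) has_real_derivative q x * (Yi x - y x)) (at x within {0..r})"
        by simp
    next
      show "continuous_on {0..r} q" unfolding q_def by (intro continuous_intros cY cy)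
    next
      show "Yi 0 - y 0 = 0" using Y0 y0 by simp
    qed (use that in auto)
    then show ?thesis by simp
  qed
  define k where "k \<xi> = (1 - y \<xi>) * (s + g * (1 - y \<xi>))" for \<xi>
  define Hf where "Hf x = p * exp (- integral {0..x} k)" for x
  have kc: "continuous_on {0..r} k" unfolding k_def by (intro continuous_intros cy)
  have dH: "(Hf has_real_derivative p * (exp (- integral {0..x} k) * (- k x))) (at x within {0..r})"
    if x: "x \<in> {0..r}" for x
  proof -
    have iq: "((\<lambda>x. integral {0..x} k) has_real_derivative k x) (at x within {0..r})"
      by (rule integral_has_real_derivative[OF kc x])
    have e: "((\<lambda>x. exp (- integral {0..x} k)) has_real_derivative exp (- integral {0..x} k) * (- k x)) (at x within {0..r})"
      by (rule derivative_eq_intros iq refl)+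
    show ?thesis unfolding Hf_def by (rule DERIV_cmult[OF e])
  qed
  have "(\<lambda>x. Gi x - Hf x) r = 0"
  proof (rule ode_zero[OF r, where D = "\<lambda>x. Gi x - Hf x" and q = "\<lambda>x. - k x"])
    fix x assume x: "x \<in> {0..r}"
    have "((\<lambda>x. Gi x - Hf x) has_real_derivative (- lam * Gi x + hG x) - p * (exp (- integral {0..x} k) * (- k x)))
       (at x within {0..r})"
      by (rule DERIV_diff[OF dG[OF x] dH[OF x]])
    moreover have "(- lam * Gi x + hG x) - p * (exp (- integral {0..x} k) * (- k x)) = - k x * (Gi x - Hf x)"
      unfolding hG_def k_def Hf_def M1[OF x] X1[OF x] Yy[OF x] by algebra
    ultimately show "((\<lambda>x. Gi x - Hf x) has_real_derivative - k x * (Gi x - Hf x)) (at x within {0..r})"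
      by simp
  next
    show "continuous_on {0..r} (\<lambda>x. - k x)" by (intro continuous_intros kc)
  next
    show "Gi 0 - Hf 0 = 0" using G0 by (simp add: Hf_def)
  qed (use r in auto)
  moreover have "k = (\<lambda>\<xi>. (1 - y \<xi>) * (s + g * (1 - y \<xi>)))" by (rule ext) (simp add: k_def)
  ultimately show ?thesis by (simp add: Hf_def)
qed

end

theorem theorem2p38:
  fixes s \<gamma> u nu0 nu1 r y0 :: real and y :: "real \<Rightarrow> real"
  assumes "nu0 = 0" and "nu0 + nu1 = 1"
    and "s > 0" and "\<gamma> \<ge> 0" and "u > 0"
    and "r \<ge> 0" and "y0 \<in> {0..1}"
    and "y 0 = y0"
    and "\<forall>\<xi>\<in>{0..r}. (y has_real_derivative
           (- y \<xi> * (1 - y \<xi>) * (s + \<gamma> * (1 - y \<xi>)) + u * (1 - y \<xi>)))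
           (at \<xi> within {0..r})"
  shows "g_asg s \<gamma> u nu0 nu1 r y0 =
         y0 * exp (- integral {0..r} (\<lambda>\<xi>. (1 - y \<xi>) * (s + \<gamma> * (1 - y \<xi>))))"
proof -
  interpret asgp s \<gamma> u y0 by unfold_locales (use assms in auto)
  have n: "nu0 = 0" "nu1 = 1" using assms(1,2) by auto
  have "g_asg s \<gamma> u nu0 nu1 r y0 = Gi r"
    unfolding g_asg_def Lim_def n by (simp add: anc_type1_prob_eq)
  also have "\<dots> = y0 * exp (- integral {0..r} (\<lambda>\<xi>. (1 - y \<xi>) * (s + \<gamma> * (1 - y \<xi>))))"
    by (rule main_loc) (use assms in auto)
  finally show ?thesis .
qed


end
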